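(* For all integers $n\geq 1$ and $0\leq k\leq n-1$, $$Q_{n,k}(x,t)=\sum_{T\in \mathcal O_{n+1,k}}x^{\mathrm{young}_T(1)-1}\,t^{\mathrm{eld}(T)}.$$
   Context: Define polynomials $Q_n(x,y,z,t)$ by $Q_1=1$ and $Q_{n+1}=[x+nz+(y+t)(n+y\partial_y)]Q_n$ for $n\ge1$, and define $Q_{n,k}(x,t)$ by $Q_n(x,y,1,t)=\sum_{k=0}^{n-1}Q_{n,k}(x,t)y^k$. All trees are rooted trees whose vertices are labeled by distinct positive integers. A vertex $j$ is a descendant of $i$ if the path from the root to $j$ passes through $i$ (every vertex is a descendant of itself); $\beta_T(i)$ is the smallest descendant of $i$ in $T$. If $j$ is a descendant of $i$ joined to $i$ by an edge, $j$ is a child of $i$ and the edge is written $(i,j)$; two children of the same vertex are brothers. A plane tree is a rooted tree in which the children of each vertex are linearly ordered (left to right). In a plane tree $T$, a vertex $j$ is elder if it has a brother $k$ to its right with $\beta_T(k)<\beta_T(j)$; otherwise $j$ is younger. $\mathrm{eld}_T(v)$ is the number of elder children of $v$, $\mathrm{eld}(T)$ is the total number of elder vertices of $T$, $\deg_T(v)$ is the number of children of $v$, and $\mathrm{young}_T(v)=\deg_T(v)-\mathrm{eld}_T(v)$. An edge $(i,j)$ is proper if $j$ is an elder child of $i$ or $i<\beta_T(j)$; otherwise it is improper. $\mathcal O_{m,k}$ denotes the set of plane trees on vertex set $[m]=\{1,\dots,m\}$ with root $1$ having exactly $k$ improper edges. *)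

theory Defs
  imports Main
begin

text \<open>A polynomial in x,y,z,t with natural-number coefficients is represented by its
coefficient function: P a b c d is the coefficient of x^a y^b z^c t^d.
qstep n P is the coefficient array of [x + n z + (y+t)(n + y d/dy)] P.\<close>

definition qstep :: "nat \<Rightarrow> (nat \<Rightarrow> nat \<Rightarrow> nat \<Rightarrow> nat \<Rightarrow> nat) \<Rightarrow> nat \<Rightarrow> nat \<Rightarrow> nat \<Rightarrow> nat \<Rightarrow> nat" where
  "qstep n P a b c d =
     (if 0 < a then P (a - 1) b c d else 0)
   + (if 0 < c then n * P a b (c - 1) d else 0)
   + (if 0 < b then (n + (b - 1)) * P a (b - 1) c d else 0)
   + (if 0 < d then (n + b) * P a b c (d - 1) else 0)"

fun Q :: "nat \<Rightarrow> nat \<Rightarrow> nat \<Rightarrow> nat \<Rightarrow> nat \<Rightarrow> nat" where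
  "Q 0 = (\<lambda>a b c d. 0)"
| "Q (Suc 0) = (\<lambda>a b c d. if a = 0 \<and> b = 0 \<and> c = 0 \<and> d = 0 then 1 else 0)"
| "Q (Suc (Suc n)) = qstep (Suc n) (Q (Suc n))"

text \<open>Coefficient of x^a t^d in Q_{n,k}(x,t), where Q_n(x,y,1,t) = sum_k Q_{n,k}(x,t) y^k:
sum over the (finite) support in the z-exponent.\<close>

definition Qnk :: "nat \<Rightarrow> nat \<Rightarrow> nat \<Rightarrow> nat \<Rightarrow> nat" where
  "Qnk n k a d = (\<Sum>c \<in> {c. Q n a k c d \<noteq> 0}. Q n a k c d)"

datatype ptree = Node nat "ptree list"

primrec root :: "ptree \<Rightarrow> nat" where
  "root (Node v ts) = v"

primrec kids :: "ptree \<Rightarrow> ptree list" where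
  "kids (Node v ts) = ts"

primrec labels :: "ptree \<Rightarrow> nat list" where
  "labels (Node v ts) = v # concat (map labels ts)"

definition beta :: "ptree \<Rightarrow> nat" where
  "beta T = Min (set (labels T))"

definition elder :: "ptree list \<Rightarrow> nat \<Rightarrow> bool" where
  "elder ts i \<longleftrightarrow> (\<exists>j. i < j \<and> j < length ts \<and> beta (ts ! j) < beta (ts ! i))"

definition eld_children :: "ptree list \<Rightarrow> nat" where
  "eld_children ts = card {i. i < length ts \<and> elder ts i}"

definition young_root :: "ptree \<Rightarrow> nat" where
  "young_root T = length (kids T) - eld_children (kids T)"

primrec eld :: "ptree \<Rightarrow> nat" where
  "eld (Node v ts) = eld_children ts + sum_list (map eld ts)"

primrec improper :: "ptree \<Rightarrow> nat" where
  "improper (Node v ts) =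
     card {i. i < length ts \<and> \<not> elder ts i \<and> \<not> v < beta (ts ! i)}
     + sum_list (map improper ts)"

definition Otrees :: "nat \<Rightarrow> nat \<Rightarrow> ptree set" where
  "Otrees m k = {T. distinct (labels T) \<and> set (labels T) = {1..m} \<and> root T = 1 \<and> improper T = k}"

end

theory Submission
  imports Defs "HOL-Library.Multiset"
begin

fun g :: "nat \<Rightarrow> nat \<Rightarrow> nat \<Rightarrow> nat \<Rightarrow> nat" where
  "g 0 k a d = (if k = 0 \<and> a = 0 \<and> d = 0 then 1 else 0)"
| "g (Suc n) k a d = (if 0 < a then g n k (a - 1) d else 0) + n * g n k a d
     + (if 0 < k then (n + k - 1) * g n (k - 1) a d else 0)
     + (if 0 < d then (n + k) * g n k a (d - 1) else 0)"

lemma g_a0: "1 \<le> n \<Longrightarrow> g n k 0 d = 0"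
proof (induction n arbitrary: k d rule: dec_induct)
  case base then show ?case by simp
next
  case (step n)
  have "g (Suc n) k 0 d = n * g n k 0 d + (if 0 < k then (n + k - 1) * g n (k - 1) 0 d else 0)
     + (if 0 < d then (n + k) * g n k 0 (d - 1) else 0)" by (simp only: g.simps) simp
  then show ?case using step.IH by simp
qed

lemma Q_supp_Suc: "Q (Suc n) a b c d \<noteq> 0 \<Longrightarrow> c < Suc n"
proof (induction n arbitrary: a b c d)
  case 0 then show ?case by (auto split: if_splits)
next
  case (Suc n)
  have "qstep (Suc n) (Q (Suc n)) a b c d \<noteq> 0" using Suc.prems by simp
  then have "Q (Suc n) (a-1) b c d \<noteq> 0 \<or> (0 < c \<and> Q (Suc n) a b (c-1) d \<noteq> 0) \<or>
     Q (Suc n) a (b-1) c d \<noteq> 0 \<or> Q (Suc n) a b c (d-1) \<noteq> 0"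
    unfolding qstep_def by (auto split: if_splits)
  then show ?case
  proof (elim disjE)
    assume "0 < c \<and> Q (Suc n) a b (c-1) d \<noteq> 0"
    then show ?thesis using Suc.IH[of a b "c-1" d] by auto
  qed (use Suc.IH in fastforce)+
qed

lemma Q_supp: "1 \<le> n \<Longrightarrow> Q n a b c d \<noteq> 0 \<Longrightarrow> c < n"
  using Q_supp_Suc by (cases n) auto

lemma Qnk_sum: assumes "1 \<le> n" shows "Qnk n k a d = (\<Sum>c<n. Q n a k c d)"
  unfolding Qnk_def
  by (rule sum.mono_neutral_left) (use Q_supp[OF assms] in auto)

lemma sum_shift_zero: "f (N::nat) = 0 \<Longrightarrow> (\<Sum>c<Suc N. f c) = (\<Sum>c<N. f c)"
  by simp

lemma Qnk_rec: assumes "1 \<le> N"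
  shows "Qnk (Suc N) k a d = (if 0 < a then Qnk N k (a - 1) d else 0) + N * Qnk N k a d
     + (if 0 < k then (N + k - 1) * Qnk N (k - 1) a d else 0)
     + (if 0 < d then (N + k) * Qnk N k a (d - 1) else 0)"
proof -
  obtain n where N: "N = Suc n" using assms by (cases N) auto
  let ?P = "Q N"
  have z: "\<And>a b d. ?P a b N d = 0" using Q_supp[OF assms] by blast
  have "Qnk (Suc N) k a d = (\<Sum>c<Suc N. qstep N ?P a k c d)"
    using Qnk_sum[of "Suc N"] N by simp
  also have "\<dots> = (\<Sum>c<Suc N. (if 0 < a then ?P (a - 1) k c d else 0))
     + (\<Sum>c<Suc N. (if 0 < c then N * ?P a k (c - 1) d else 0))
     + (\<Sum>c<Suc N. (if 0 < k then (N + (k - 1)) * ?P a (k - 1) c d else 0))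
     + (\<Sum>c<Suc N. (if 0 < d then (N + k) * ?P a k c (d - 1) else 0))"
    unfolding qstep_def by (simp add: sum.distrib)
  also have "(\<Sum>c<Suc N. (if 0 < a then ?P (a - 1) k c d else 0)) = (if 0 < a then Qnk N k (a - 1) d else 0)"
    using z Qnk_sum[OF assms] by simp
  also have "(\<Sum>c<Suc N. (if 0 < c then N * ?P a k (c - 1) d else 0)) = N * Qnk N k a d"
    unfolding sum.lessThan_Suc_shift using Qnk_sum[OF assms] by (simp add: sum_distrib_left)
  also have "(\<Sum>c<Suc N. (if 0 < k then (N + (k - 1)) * ?P a (k - 1) c d else 0)) = (if 0 < k then (N + k - 1) * Qnk N (k - 1) a d else 0)"
    using z Qnk_sum[OF assms] by (simp add: sum_distrib_left)
  also have "(\<Sum>c<Suc N. (if 0 < d then (N + k) * ?P a k c (d - 1) else 0)) = (if 0 < d then (N + k) * Qnk N k a (d - 1) else 0)"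
    using z Qnk_sum[OF assms] by (simp add: sum_distrib_left)
  finally show ?thesis .
qed

lemma Qnk_g: "1 \<le> n \<Longrightarrow> Qnk n k a d = g n k (Suc a) d"
proof (induction n arbitrary: k a d rule: dec_induct)
  case base
  show ?case using Qnk_sum[of 1] by simp
next
  case (step N)
  show ?case
    using Qnk_rec[OF step.hyps(1)] step.IH g_a0[OF step.hyps(1)]
    by (cases a) auto
qed

lemma labels_ne [simp]: "labels t \<noteq> []" by (cases t) simp

lemma beta_in: "beta t \<in> set (labels t)"
  unfolding beta_def by (rule Min_in) (auto simp: labels_ne)

lemma beta_le: "x \<in> set (labels t) \<Longrightarrow> beta t \<le> x"
  unfolding beta_def by simp

lemma beta_Leaf [simp]: "beta (Node m []) = m"
  unfolding beta_def by simp

lemma card_less_Suc_split: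
  "card {i. i < Suc n \<and> P i} = (if P 0 then 1 else 0) + card {i. i < n \<and> P (Suc i)}"
proof -
  have e: "{i. i < Suc n \<and> P i} = {i::nat. i = 0 \<and> P 0} \<union> Suc ` {i. i < n \<and> P (Suc i)}"
    by (auto simp: image_iff less_Suc_eq_0_disj)
  have "card ({i::nat. i = 0 \<and> P 0} \<union> Suc ` {i. i < n \<and> P (Suc i)}) =
        card {i::nat. i = 0 \<and> P 0} + card (Suc ` {i. i < n \<and> P (Suc i)})"
    by (subst card_Un_disjoint) (auto intro: finite_subset[of _ "{0}"])
  also have "card (Suc ` {i. i < n \<and> P (Suc i)}) = card {i. i < n \<and> P (Suc i)}"
    by (rule card_image) auto
  also have "card {i::nat. i = 0 \<and> P 0} = (if P 0 then 1 else 0)" by auto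
  finally show ?thesis using e by simp
qed

fun eldL :: "nat list \<Rightarrow> nat" where
  "eldL [] = 0"
| "eldL (b # bs) = (if \<exists>c\<in>set bs. c < b then 1 else 0) + eldL bs"

fun impL :: "nat \<Rightarrow> nat list \<Rightarrow> nat" where
  "impL v [] = 0"
| "impL v (b # bs) = (if (\<forall>c\<in>set bs. \<not> c < b) \<and> \<not> v < b then 1 else 0) + impL v bs"

lemma elder_Cons_Suc [simp]: "elder (t # ts) (Suc i) = elder ts i"
  unfolding elder_def
proof
  assume "\<exists>j>Suc i. j < length (t # ts) \<and> beta ((t # ts) ! j) < beta ((t # ts) ! Suc i)"
  then obtain j where "j > Suc i" "j < length (t # ts)" "beta ((t # ts) ! j) < beta ((t # ts) ! Suc i)" by blast
  then show "\<exists>j>i. j < length ts \<and> beta (ts ! j) < beta (ts ! i)"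
    by (intro exI[of _ "j - 1"]) (cases j, auto)
next
  assume "\<exists>j>i. j < length ts \<and> beta (ts ! j) < beta (ts ! i)"
  then obtain j where "j > i" "j < length ts" "beta (ts ! j) < beta (ts ! i)" by blast
  then show "\<exists>j>Suc i. j < length (t # ts) \<and> beta ((t # ts) ! j) < beta ((t # ts) ! Suc i)"
    by (intro exI[of _ "Suc j"]) auto
qed

lemma elder_Cons_0: "elder (t # ts) 0 = (\<exists>s\<in>set ts. beta s < beta t)"
  unfolding elder_def
proof
  assume "\<exists>j>0. j < length (t # ts) \<and> beta ((t # ts) ! j) < beta ((t # ts) ! 0)"
  then obtain j where "j > 0" "j < length (t # ts)" "beta ((t # ts) ! j) < beta ((t # ts) ! 0)" by blast
  then show "\<exists>s\<in>set ts. beta s < beta t"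
    by (cases j) (auto intro: nth_mem)
next
  assume "\<exists>s\<in>set ts. beta s < beta t"
  then obtain j where "j < length ts" "beta (ts ! j) < beta t" by (auto simp: in_set_conv_nth)
  then show "\<exists>j>0. j < length (t # ts) \<and> beta ((t # ts) ! j) < beta ((t # ts) ! 0)"
    by (intro exI[of _ "Suc j"]) auto
qed

lemma eldc_eq: "eld_children ts = eldL (map beta ts)"
proof (induction ts)
  case Nil then show ?case by (simp add: eld_children_def)
next
  case (Cons t ts)
  have "eld_children (t # ts) = card {i. i < Suc (length ts) \<and> elder (t # ts) i}"
    by (simp add: eld_children_def)
  also have "\<dots> = (if elder (t # ts) 0 then 1 else 0) + eld_children ts"
    by (subst card_less_Suc_split) (simp add: eld_children_def)
  finally show ?case using Cons by (simp add: elder_Cons_0)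
qed

definition impidx :: "nat \<Rightarrow> ptree list \<Rightarrow> nat set" where
  "impidx v ts = {i. i < length ts \<and> \<not> elder ts i \<and> \<not> v < beta (ts ! i)}"

lemma impidx_eq: "card (impidx v ts) = impL v (map beta ts)"
proof (induction ts)
  case Nil then show ?case by (simp add: impidx_def)
next
  case (Cons t ts)
  have "card (impidx v (t # ts)) = card {i. i < Suc (length ts) \<and> \<not> elder (t # ts) i \<and> \<not> v < beta ((t # ts) ! i)}"
    by (simp add: impidx_def)
  also have "\<dots> = (if \<not> elder (t # ts) 0 \<and> \<not> v < beta t then 1 else 0) + card (impidx v ts)"
    by (subst card_less_Suc_split) (simp add: impidx_def)
  finally show ?case using Cons by (auto simp: elder_Cons_0)
qed

lemma improper_Node: "improper (Node v ts) = impL v (map beta ts) + sum_list (map improper ts)"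
  using impidx_eq[of v ts] by (simp add: impidx_def)

lemma eld_Node: "eld (Node v ts) = eldL (map beta ts) + sum_list (map eld ts)"
  by (simp add: eldc_eq)

lemma young_root_Node: "young_root (Node v ts) = length ts - eldL (map beta ts)"
  by (simp add: young_root_def eldc_eq)

declare improper.simps [simp del] eld.simps [simp del]

lemma eldL_ins_max:
  "\<forall>x\<in>set A \<union> set B. x < y \<Longrightarrow> eldL (A @ y # B) = eldL (A @ B) + (if B = [] then 0 else 1)"
proof (induction A)
  case Nil then show ?case by (cases B) auto
next
  case (Cons a A) then show ?case by auto
qed

lemma impL_ins_max:
  "v < y \<Longrightarrow> \<forall>x\<in>set A \<union> set B. x < y \<Longrightarrow> impL v (A @ y # B) = impL v (A @ B)"
proof (induction A)
  case Nil then show ?case by auto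
next
  case (Cons a A) then show ?case by auto
qed

lemma eldL_cong:
  assumes "\<And>b. (\<exists>c\<in>set B1. c < b) = (\<exists>c\<in>set B2. c < b)"
  shows "eldL (A @ B1) + eldL B2 = eldL (A @ B2) + eldL B1"
  using assms by (induction A) auto

lemma impL_cong:
  assumes "\<And>b. (\<exists>c\<in>set B1. c < b) = (\<exists>c\<in>set B2. c < b)"
    and "c0 \<in> set B1" "c0 < v1" "c0 < v2"
  shows "impL v1 (A @ B1) + impL v2 B2 = impL v2 (A @ B2) + impL v1 B1"
proof (induction A)
  case Nil then show ?case by simp
next
  case (Cons a A)
  have "((\<forall>c\<in>set (A @ B1). \<not> c < a) \<and> \<not> v1 < a) = ((\<forall>c\<in>set (A @ B2). \<not> c < a) \<and> \<not> v2 < a)"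
  proof -
    have q: "(\<forall>c\<in>set (A @ B1). \<not> c < a) = (\<forall>c\<in>set (A @ B2). \<not> c < a)"
      using assms(1)[of a] by auto
    have "(\<forall>c\<in>set (A @ B1). \<not> c < a) \<Longrightarrow> \<not> v1 < a \<and> \<not> v2 < a"
      using assms(2-4) by (metis Un_iff not_less_iff_gr_or_eq order.strict_trans set_append)
    then show ?thesis using q by blast
  qed
  then show ?case using Cons by simp
qed

datatype lop = LLeaf nat | LEdg | LImpY nat | LImpT nat
datatype ty = TN | TY | TT

fun loc :: "nat \<Rightarrow> ptree \<Rightarrow> lop \<Rightarrow> ptree" where
  "loc m (Node v cs) (LLeaf q) = Node v (take q cs @ Node m [] # drop q cs)"
| "loc m (Node v cs) LEdg = Node m [Node v cs]"
| "loc m (Node v cs) (LImpY j) = Node m (take (Suc j) cs @ [Node v (drop (Suc j) cs)])"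
| "loc m (Node v cs) (LImpT j) = Node m (take j cs @ [Node v (drop (Suc j) cs), cs ! j])"

fun lvalid :: "ptree \<Rightarrow> lop \<Rightarrow> bool" where
  "lvalid (Node v cs) (LLeaf q) = (q \<le> length cs)"
| "lvalid (Node v cs) LEdg = True"
| "lvalid (Node v cs) (LImpY j) = (j \<in> impidx v cs)"
| "lvalid (Node v cs) (LImpT j) = (j \<in> impidx v cs)"

fun lty :: "ptree \<Rightarrow> lop \<Rightarrow> ty" where
  "lty (Node v cs) (LLeaf q) = (if q = length cs then TN else TT)"
| "lty X LEdg = TY"
| "lty X (LImpY j) = TY"
| "lty X (LImpT j) = TT"

definition wfm :: "nat \<Rightarrow> ptree \<Rightarrow> bool" where
  "wfm m X \<longleftrightarrow> distinct (labels X) \<and> (\<forall>l\<in>set (labels X). l < m)"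

lemma dist_concat_disj:
  "distinct (concat (map labels cs)) \<Longrightarrow> i < length cs \<Longrightarrow> j < length cs \<Longrightarrow> i \<noteq> j
   \<Longrightarrow> set (labels (cs ! i)) \<inter> set (labels (cs ! j)) = {}"
proof (induction cs arbitrary: i j)
  case Nil then show ?case by simp
next
  case (Cons c cs)
  show ?case
  proof (cases i)
    case 0
    then obtain j' where "j = Suc j'" using Cons by (cases j) auto
    then show ?thesis using Cons 0 by (auto dest!: nth_mem)
  next
    case (Suc i')
    show ?thesis
    proof (cases j)
      case 0 then show ?thesis using Cons Suc by (auto dest!: nth_mem)
    next
      case (Suc j') then show ?thesis using Cons \<open>i = Suc i'\<close> by auto
    qed
  qed
qed

lemma beta_neq:
  "distinct (labels (Node v cs)) \<Longrightarrow> i < length cs \<Longrightarrow> j < length cs \<Longrightarrow> i \<noteq> j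
   \<Longrightarrow> beta (cs ! i) \<noteq> beta (cs ! j)"
  using dist_concat_disj[of cs i j] beta_in[of "cs ! i"] beta_in[of "cs ! j"] by auto

lemma beta_neq_root:
  "distinct (labels (Node v cs)) \<Longrightarrow> j < length cs \<Longrightarrow> beta (cs ! j) \<noteq> v"
  using beta_in[of "cs ! j"] by (auto dest!: nth_mem)

lemma beta_gt: "c < v \<Longrightarrow> (\<forall>r\<in>set R. c < beta r) \<Longrightarrow> c < beta (Node v R)"
proof -
  assume a: "c < v" "\<forall>r\<in>set R. c < beta r"
  have "beta (Node v R) \<in> set (labels (Node v R))" by (rule beta_in)
  then show ?thesis using a by (auto dest: beta_le) (meson beta_le order.strict_trans2)
qed

lemma beta_lt_m: "wfm m X \<Longrightarrow> beta X < m"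
  using beta_in[of X] by (auto simp: wfm_def)

lemma set_drop_nth: "r \<in> set (drop (Suc j) cs) \<Longrightarrow> \<exists>l. j < l \<and> l < length cs \<and> r = cs ! l"
proof -
  assume "r \<in> set (drop (Suc j) cs)"
  then obtain i where "i < length (drop (Suc j) cs)" "r = drop (Suc j) cs ! i"
    by (auto simp: in_set_conv_nth)
  then show ?thesis by (intro exI[of _ "Suc j + i"]) auto
qed

lemma young_facts:
  assumes "j \<in> impidx v cs" "distinct (labels (Node v cs))"
  shows "beta (cs ! j) < v" "\<forall>r\<in>set (drop (Suc j) cs). beta (cs ! j) < beta r" "j < length cs"
proof -
  show j: "j < length cs" using assms by (simp add: impidx_def)
  have ne: "\<not> elder cs j" "\<not> v < beta (cs ! j)" using assms(1) by (simp_all add: impidx_def)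
  show "beta (cs ! j) < v" using ne(2) beta_neq_root[OF assms(2) j] by linarith
  show "\<forall>r\<in>set (drop (Suc j) cs). beta (cs ! j) < beta r"
  proof
    fix r assume "r \<in> set (drop (Suc j) cs)"
    then obtain l where l: "j < l" "l < length cs" "r = cs ! l" by (metis set_drop_nth)
    then have "\<not> beta r < beta (cs ! j)" using ne(1) unfolding elder_def by blast
    moreover have "beta r \<noteq> beta (cs ! j)"
    proof -
      have "l \<noteq> j" using l(1) by simp
      then have "beta (cs ! l) \<noteq> beta (cs ! j)" by (rule beta_neq[OF assms(2) l(2) j])
      then show ?thesis using l(3) by simp
    qed
    ultimately show "beta (cs ! j) < beta r" by simp
  qed
qed

lemma loc_mset:
  assumes "lvalid X k"
  shows "mset (labels (loc m X k)) = add_mset m (mset (labels X))"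
proof (cases X)
  case (Node v cs)
  show ?thesis
  proof (cases k)
    case (LLeaf q)
    have "mset (labels X) = add_mset v (mset (concat (map labels (take q cs @ drop q cs))))"
      using Node by simp
    then show ?thesis using Node LLeaf by (simp del: append_take_drop_id)
  next
    case LEdg then show ?thesis using Node by simp
  next
    case (LImpY j)
    have "mset (labels X) = add_mset v (mset (concat (map labels (take (Suc j) cs @ drop (Suc j) cs))))"
      using Node by simp
    then show ?thesis using Node LImpY by (simp del: append_take_drop_id)
  next
    case (LImpT j)
    then have j: "j < length cs" using assms Node by (simp add: impidx_def)
    have "mset (labels X) = add_mset v (mset (concat (map labels (take j cs @ cs ! j # drop (Suc j) cs))))"
      using Node id_take_nth_drop[OF j] by simp
    then show ?thesis using Node LImpT by (simp add: ac_simps del: append_take_drop_id)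
  qed
qed

lemma eldL_le: "eldL bs \<le> length bs"
  by (induction bs) auto

lemma child_beta_lt:
  assumes "wfm m (Node v cs)" shows "\<forall>x\<in>set (map beta cs). x < m" "v < m"
proof -
  show "v < m" using assms by (simp add: wfm_def)
  show "\<forall>x\<in>set (map beta cs). x < m"
  proof
    fix x assume "x \<in> set (map beta cs)"
    then obtain c where "c \<in> set cs" "x = beta c" by auto
    then show "x < m" using assms beta_in[of c] by (auto simp: wfm_def)
  qed
qed

lemma imp_leaf0 [simp]: "improper (Node m []) = 0" by (simp add: improper_Node)
lemma eld_leaf0 [simp]: "eld (Node m []) = 0" by (simp add: eld_Node)

lemma loc_Leaf:
  assumes "X = Node v cs" "q \<le> length cs" "wfm m X"
  shows "improper (loc m X (LLeaf q)) = improper X"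
    "eld (loc m X (LLeaf q)) = eld X + (if q = length cs then 0 else 1)"
    "length (kids (loc m X (LLeaf q))) - eldL (map beta (kids (loc m X (LLeaf q)))) =
       length cs - eldL (map beta cs) + (if q = length cs then 1 else 0)"
proof -
  let ?bs = "map beta cs"
  have lt: "\<forall>x\<in>set (take q ?bs) \<union> set (drop q ?bs). x < m" "v < m"
    using child_beta_lt[of m v cs] assms by (metis Un_iff in_set_dropD in_set_takeD)+
  have mb: "map beta (take q cs @ Node m [] # drop q cs) = take q ?bs @ m # drop q ?bs"
    by (simp add: take_map drop_map)
  have dq: "(drop q ?bs = []) = (q = length cs)" using assms(2) by auto
  have e1: "impL v (map beta (take q cs @ Node m [] # drop q cs)) = impL v ?bs"
    unfolding mb using impL_ins_max[OF lt(2) lt(1)] by simp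
  have e2: "eldL (map beta (take q cs @ Node m [] # drop q cs)) = eldL ?bs + (if q = length cs then 0 else 1)"
    unfolding mb using eldL_ins_max[OF lt(1)] dq by simp
  have s1: "sum_list (map improper (take q cs @ Node m [] # drop q cs)) = sum_list (map improper cs)"
    by (subst append_take_drop_id[symmetric, of cs q]) (simp only: map_append sum_list_append, simp)
  have s2: "sum_list (map eld (take q cs @ Node m [] # drop q cs)) = sum_list (map eld cs)"
    by (subst append_take_drop_id[symmetric, of cs q]) (simp only: map_append sum_list_append, simp)
  show "improper (loc m X (LLeaf q)) = improper X"
    using assms(1) e1 s1 by (simp add: improper_Node)
  show "eld (loc m X (LLeaf q)) = eld X + (if q = length cs then 0 else 1)"
    using assms(1) e2 s2 by (simp add: eld_Node)
  show "length (kids (loc m X (LLeaf q))) - eldL (map beta (kids (loc m X (LLeaf q)))) =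
       length cs - eldL (map beta cs) + (if q = length cs then 1 else 0)"
    using assms(1,2) e2 eldL_le[of ?bs] by auto
qed

lemma loc_Edg:
  assumes "wfm m X"
  shows "improper (loc m X LEdg) = Suc (improper X)" "eld (loc m X LEdg) = eld X"
proof -
  obtain v cs where X: "X = Node v cs" by (cases X)
  have "beta X < m" using beta_lt_m[OF assms] .
  then show "improper (loc m X LEdg) = Suc (improper X)" "eld (loc m X LEdg) = eld X"
    using X by (simp_all add: improper_Node eld_Node)
qed

lemma imp_setup:
  assumes "X = Node v cs" "j \<in> impidx v cs" "wfm m X"
  defines "P \<equiv> take j cs" and "C \<equiv> cs ! j" and "R \<equiv> drop (Suc j) cs"
  shows "cs = P @ C # R" "take (Suc j) cs = P @ [C]" "beta C < v" "\<forall>r\<in>set R. beta C < beta r"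
    "beta C < beta (Node v R)" "beta (Node v R) < m" "v < m"
    "\<And>b. (\<exists>x\<in>set (beta C # map beta R). x < b) = (\<exists>x\<in>set [beta C, beta (Node v R)]. x < b)"
    "eldL (beta C # map beta R) = eldL (map beta R)"
    "impL v (beta C # map beta R) = Suc (impL v (map beta R))"
proof -
  have d: "distinct (labels (Node v cs))" using assms by (simp add: wfm_def)
  note yf = young_facts[OF assms(2) d]
  show cs: "cs = P @ C # R" using id_take_nth_drop[OF yf(3)] P_def C_def R_def by simp
  show "take (Suc j) cs = P @ [C]" using take_Suc_conv_app_nth[OF yf(3)] by (simp add: P_def C_def)
  show cv: "beta C < v" using yf C_def by simp
  show cR: "\<forall>r\<in>set R. beta C < beta r" using yf C_def R_def by simp
  show cw: "beta C < beta (Node v R)" using beta_gt[OF cv cR] .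
  show vm: "v < m" using assms(1,3) by (simp add: wfm_def)
  have "beta (Node v R) \<le> v" by (rule beta_le) simp
  then show "beta (Node v R) < m" using vm by simp
  show "\<And>b. (\<exists>x\<in>set (beta C # map beta R). x < b) = (\<exists>x\<in>set [beta C, beta (Node v R)]. x < b)"
    using cR cw by auto
  show "eldL (beta C # map beta R) = eldL (map beta R)"
    using cR by auto
  show "impL v (beta C # map beta R) = Suc (impL v (map beta R))"
    using cR cv by auto
qed

lemma loc_ImpY:
  assumes "X = Node v cs" "j \<in> impidx v cs" "wfm m X"
  shows "improper (loc m X (LImpY j)) = Suc (improper X)" "eld (loc m X (LImpY j)) = eld X"
proof -
  define P where "P = take j cs"
  define C where "C = cs ! j"
  define R where "R = drop (Suc j) cs"
  note S = imp_setup[OF assms, folded P_def C_def R_def]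
  let ?bP = "map beta P" and ?c = "beta C" and ?w = "beta (Node v R)" and ?bR = "map beta R"
  have loc: "loc m X (LImpY j) = Node m (P @ [C, Node v R])" using assms(1) S(2) R_def by simp
  have X: "X = Node v (P @ C # R)" using assms(1) S(1) by simp
  have ec: "eldL (?bP @ ?c # ?bR) + eldL [?c, ?w] = eldL (?bP @ [?c, ?w]) + eldL (?c # ?bR)"
    using eldL_cong[of "?c # ?bR" "[?c, ?w]" ?bP] S(8) by simp
  have ic: "impL v (?bP @ ?c # ?bR) + impL m [?c, ?w] = impL m (?bP @ [?c, ?w]) + impL v (?c # ?bR)"
    using impL_cong[of "?c # ?bR" "[?c, ?w]" ?c v m ?bP] S(3,7,8) by simp
  have e2: "eldL [?c, ?w] = 0" using S(5) by simp
  have i2: "impL m [?c, ?w] = 2" using S(5,6) S(3,7) by simp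
  show "improper (loc m X (LImpY j)) = Suc (improper X)"
    unfolding loc unfolding X using ic i2 S(10) by (simp add: improper_Node)
  show "eld (loc m X (LImpY j)) = eld X"
    unfolding loc unfolding X using ec e2 S(9) by (simp add: eld_Node)
qed

lemma loc_ImpT:
  assumes "X = Node v cs" "j \<in> impidx v cs" "wfm m X"
  shows "improper (loc m X (LImpT j)) = improper X" "eld (loc m X (LImpT j)) = Suc (eld X)"
proof -
  define P where "P = take j cs"
  define C where "C = cs ! j"
  define R where "R = drop (Suc j) cs"
  note S = imp_setup[OF assms, folded P_def C_def R_def]
  let ?bP = "map beta P" and ?c = "beta C" and ?w = "beta (Node v R)" and ?bR = "map beta R"
  have loc: "loc m X (LImpT j) = Node m (P @ [Node v R, C])" using assms(1) P_def C_def R_def by simp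
  have X: "X = Node v (P @ C # R)" using assms(1) S(1) by simp
  have S8': "\<And>b. (\<exists>x\<in>set (?c # ?bR). x < b) = (\<exists>x\<in>set [?w, ?c]. x < b)"
    using S(8) by auto
  have ec: "eldL (?bP @ ?c # ?bR) + eldL [?w, ?c] = eldL (?bP @ [?w, ?c]) + eldL (?c # ?bR)"
    using eldL_cong[of "?c # ?bR" "[?w, ?c]" ?bP] S8' by simp
  have ic: "impL v (?bP @ ?c # ?bR) + impL m [?w, ?c] = impL m (?bP @ [?w, ?c]) + impL v (?c # ?bR)"
    using impL_cong[of "?c # ?bR" "[?w, ?c]" ?c v m ?bP] S(3,7) S8' by simp
  have e2: "eldL [?w, ?c] = 1" using S(5) by simp
  have i2: "impL m [?w, ?c] = 1" using S(5,6) S(3,7) by simp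
  show "improper (loc m X (LImpT j)) = improper X"
    unfolding loc unfolding X using ic i2 S(10) by (simp add: improper_Node)
  show "eld (loc m X (LImpT j)) = Suc (eld X)"
    unfolding loc unfolding X using ec e2 S(9) by (simp add: eld_Node)
qed

fun ins :: "nat \<Rightarrow> ptree \<Rightarrow> nat list \<Rightarrow> lop \<Rightarrow> ptree" where
  "ins m X [] k = loc m X k"
| "ins m (Node v cs) (i # p) k = Node v (cs[i := ins m (cs ! i) p k])"

fun validN :: "ptree \<Rightarrow> nat list \<Rightarrow> lop \<Rightarrow> bool" where
  "validN X [] k = lvalid X k"
| "validN (Node v cs) (i # p) k = (i < length cs \<and> validN (cs ! i) p k)"

fun tyN :: "ptree \<Rightarrow> nat list \<Rightarrow> lop \<Rightarrow> ty" where
  "tyN X [] k = lty X k"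
| "tyN (Node v cs) (i # p) k = tyN (cs ! i) p k"

lemma sum_upd: "i < length cs \<Longrightarrow>
  sum_list (map f (cs[i := Z])) + f (cs ! i) = sum_list (map f cs) + (f Z :: nat)"
proof -
  assume i: "i < length cs"
  have a: "cs[i := Z] = take i cs @ Z # drop (Suc i) cs" by (rule upd_conv_take_nth_drop[OF i])
  have b: "cs = take i cs @ cs ! i # drop (Suc i) cs" by (rule id_take_nth_drop[OF i])
  show ?thesis by (subst a, subst (2) b) simp
qed

lemma mset_upd: "i < length cs \<Longrightarrow>
  mset (concat (map labels (cs[i := Z]))) + mset (labels (cs ! i)) = mset (concat (map labels cs)) + mset (labels Z)"
proof -
  assume i: "i < length cs"
  have a: "cs[i := Z] = take i cs @ Z # drop (Suc i) cs" by (rule upd_conv_take_nth_drop[OF i])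
  have b: "cs = take i cs @ cs ! i # drop (Suc i) cs" by (rule id_take_nth_drop[OF i])
  show ?thesis by (subst a, subst (2) b) (simp add: ac_simps)
qed

lemma wfm_child: "wfm m (Node v cs) \<Longrightarrow> i < length cs \<Longrightarrow> wfm m (cs ! i)"
proof -
  assume w: "wfm m (Node v cs)" and i: "i < length cs"
  have b: "cs = take i cs @ cs ! i # drop (Suc i) cs" by (rule id_take_nth_drop[OF i])
  have "distinct (concat (map labels (take i cs @ cs ! i # drop (Suc i) cs)))"
    using w b unfolding wfm_def by (metis distinct.simps(2) labels.simps)
  then have "distinct (labels (cs ! i))" by simp
  moreover have "set (labels (cs ! i)) \<subseteq> set (labels (Node v cs))"
    using i by (auto dest!: nth_mem)
  ultimately show ?thesis using w unfolding wfm_def by blast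
qed

lemma ins_mset: "validN X p k \<Longrightarrow> mset (labels (ins m X p k)) = add_mset m (mset (labels X))"
proof (induction p arbitrary: X)
  case Nil then show ?case by (simp add: loc_mset)
next
  case (Cons i p)
  obtain v cs where X: "X = Node v cs" by (cases X)
  have i: "i < length cs" and vp: "validN (cs ! i) p k" using Cons.prems X by auto
  have "mset (concat (map labels (cs[i := ins m (cs ! i) p k]))) + mset (labels (cs ! i)) =
        mset (concat (map labels cs)) + add_mset m (mset (labels (cs ! i)))"
    using mset_upd[OF i, of "ins m (cs ! i) p k"] Cons.IH[OF vp] by simp
  then show ?case using X by simp
qed

lemma beta_add:
  assumes "mset (labels Y) = add_mset m (mset (labels X))" "\<forall>l\<in>set (labels X). l < m"
  shows "beta Y = beta X"
proof -
  have s: "set (labels Y) = insert m (set (labels X))"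
    using arg_cong[OF assms(1), of set_mset] by simp
  have "beta X < m" using assms(2) beta_in[of X] by blast
  then show ?thesis unfolding beta_def s
    by (simp add: Min_insert labels_ne)
qed

lemma wfm_add:
  assumes "mset (labels Y) = add_mset m (mset (labels X))" "wfm m X"
  shows "distinct (labels Y)" "\<forall>l\<in>set (labels Y). l \<le> m"
proof -
  have s: "set (labels Y) = insert m (set (labels X))"
    using arg_cong[OF assms(1), of set_mset] by simp
  show "\<forall>l\<in>set (labels Y). l \<le> m" using assms(2) s by (auto simp: wfm_def)
  have "m \<notin> set (labels X)" using assms(2) by (auto simp: wfm_def)
  then have "distinct (m # labels X)" using assms(2) by (simp add: wfm_def)
  moreover have "mset (labels Y) = mset (m # labels X)" using assms(1) by simp
  ultimately show "distinct (labels Y)" by (metis mset_eq_imp_distinct_iff)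
qed

lemma ins_beta: "validN X p k \<Longrightarrow> wfm m X \<Longrightarrow> beta (ins m X p k) = beta X"
  by (rule beta_add) (auto simp: ins_mset wfm_def)

lemma ins_stats:
  "validN X p k \<Longrightarrow> wfm m X \<Longrightarrow>
    improper (ins m X p k) = improper X + (if tyN X p k = TY then 1 else 0) \<and>
    eld (ins m X p k) = eld X + (if tyN X p k = TT then 1 else 0)"
proof (induction p arbitrary: X)
  case Nil
  obtain v cs where X: "X = Node v cs" by (cases X)
  show ?case
  proof (cases k)
    case (LLeaf q)
    then show ?thesis using loc_Leaf[OF X _ Nil.prems(2), of q] Nil.prems X by simp
  next
    case LEdg then show ?thesis using loc_Edg[OF Nil.prems(2)] X by simp
  next
    case (LImpY j) then show ?thesis using loc_ImpY[OF X _ Nil.prems(2), of j] Nil.prems X by simp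
  next
    case (LImpT j) then show ?thesis using loc_ImpT[OF X _ Nil.prems(2), of j] Nil.prems X by simp
  qed
next
  case (Cons i p)
  obtain v cs where X: "X = Node v cs" by (cases X)
  have i: "i < length cs" and vp: "validN (cs ! i) p k" using Cons.prems X by auto
  have wc: "wfm m (cs ! i)" using wfm_child Cons.prems(2) X i by blast
  let ?Z = "ins m (cs ! i) p k"
  have bz: "beta ?Z = beta (cs ! i)" using ins_beta[OF vp wc] .
  have mb: "map beta (cs[i := ?Z]) = map beta cs"
  proof -
    have "(map beta cs)[i := beta (cs ! i)] = map beta cs" by (metis list_update_id nth_map i)
    then show ?thesis using bz by (simp add: map_update)
  qed
  note IH = Cons.IH[OF vp wc]
  have s1: "sum_list (map improper (cs[i := ?Z])) + improper (cs ! i) = sum_list (map improper cs) + improper ?Z"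
    by (rule sum_upd[OF i])
  have s2: "sum_list (map eld (cs[i := ?Z])) + eld (cs ! i) = sum_list (map eld cs) + eld ?Z"
    by (rule sum_upd[OF i])
  show ?case using X mb s1 s2 IH by (simp add: improper_Node eld_Node)
qed

lemma ins_root: "ins m X (i # p) k = Node (root X) ((kids X)[i := ins m (kids X ! i) p k])"
  by (cases X) simp

lemma m_notin: "wfm m X \<Longrightarrow> m \<notin> set (labels X)"
  by (auto simp: wfm_def)

lemma leafM_notin: "wfm m (Node v cs) \<Longrightarrow> Node m [] \<notin> set cs"
  by (auto simp: wfm_def)

lemma root_lt: "wfm m X \<Longrightarrow> root X < m"
  by (cases X) (auto simp: wfm_def)

lemma ins_has_m: "validN X p k \<Longrightarrow> m \<in> set (labels (ins m X p k))"
  using ins_mset[of X p k m] by (metis set_mset_mset union_single_eq_member)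

lemma ins_len: "validN X p k \<Longrightarrow> length (labels (ins m X p k)) = Suc (length (labels X))"
  using arg_cong[OF ins_mset[of X p k m], of size] by simp

lemma ins_not_leafM: "validN X p k \<Longrightarrow> ins m X p k \<noteq> Node m []"
proof
  assume "validN X p k" "ins m X p k = Node m []"
  then have "length (labels (Node m [])) = Suc (length (labels X))" using ins_len by metis
  then show False by simp
qed

lemma loc_root_m: "(\<forall>q. k \<noteq> LLeaf q) \<Longrightarrow> root (loc m X k) = m"
  by (cases X; cases k) auto

lemma loc_leaf_root: "root (loc m X (LLeaf q)) = root X"
  by (cases X) auto

lemma ins_cons_root: "root (ins m X (i # p) k) = root X"
  by (cases X) auto

lemma two_last: "xs @ [a, b] = ys @ [c, d] \<Longrightarrow> xs = ys \<and> a = c \<and> b = d"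
  by (metis append.assoc append_Cons append_Nil butlast_snoc last_snoc)

lemma loc_vs_cons:
  assumes "lvalid X1 k1" "validN X2 (i # p) k2" "wfm m X1" "wfm m X2"
  shows "loc m X1 k1 \<noteq> ins m X2 (i # p) k2"
proof
  assume eq: "loc m X1 k1 = ins m X2 (i # p) k2"
  obtain v2 cs2 where X2: "X2 = Node v2 cs2" by (cases X2)
  have i: "i < length cs2" and vp: "validN (cs2 ! i) p k2" using assms(2) X2 by auto
  let ?Z = "ins m (cs2 ! i) p k2"
  have r2: "root (ins m X2 (i # p) k2) \<noteq> m" using root_lt[OF assms(4)] ins_cons_root[of m X2 i p k2] by simp
  show False
  proof (cases "\<exists>q. k1 = LLeaf q")
    case False
    then show ?thesis using loc_root_m[of k1 m X1] eq r2 by auto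
  next
    case True
    then obtain q where k1: "k1 = LLeaf q" by blast
    obtain v1 cs1 where X1: "X1 = Node v1 cs1" by (cases X1)
    have "cs2[i := ?Z] = take q cs1 @ Node m [] # drop q cs1"
      using eq X1 X2 k1 by simp
    then have "Node m [] \<in> set (cs2[i := ?Z])" by simp
    then have "Node m [] = ?Z \<or> Node m [] \<in> set cs2"
      using set_update_subset_insert[of cs2 i ?Z] by blast
    then show False using ins_not_leafM[OF vp] leafM_notin[OF assms(4)[unfolded X2]] by metis
  qed
qed

lemma impY_last_lemma: "X = Node v cs \<Longrightarrow> j \<in> impidx v cs \<Longrightarrow> wfm m X \<Longrightarrow>
     take (Suc j) cs @ [Node v (drop (Suc j) cs)] = take j cs @ [cs ! j, Node v (drop (Suc j) cs)]
     \<and> beta (cs ! j) < beta (Node v (drop (Suc j) cs)) \<and> length (take j cs) = j"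
proof -
  assume a: "X = Node v cs" "j \<in> impidx v cs" "wfm m X"
  have j: "j < length cs" using a(2) by (simp add: impidx_def)
  show ?thesis using imp_setup(5)[OF a] j by (simp add: take_Suc_conv_app_nth)
qed

lemma loc_inj:
  assumes "lvalid X1 k1" "lvalid X2 k2" "wfm m X1" "wfm m X2" "loc m X1 k1 = loc m X2 k2"
  shows "X1 = X2 \<and> k1 = k2"
proof -
  obtain v1 cs1 where X1: "X1 = Node v1 cs1" by (cases X1)
  obtain v2 cs2 where X2: "X2 = Node v2 cs2" by (cases X2)
  have v1m: "v1 \<noteq> m" using root_lt[OF assms(3)] X1 by simp
  have v2m: "v2 \<noteq> m" using root_lt[OF assms(4)] X2 by simp
  have n1: "Node m [] \<notin> set cs1" using leafM_notin assms(3) X1 by blast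
  have n2: "Node m [] \<notin> set cs2" using leafM_notin assms(4) X2 by blast
  note impY_last = impY_last_lemma
  show ?thesis
  proof (cases k1)
    case (LLeaf q1)
    show ?thesis
    proof (cases k2)
      case (LLeaf q2)
      have q1: "q1 \<le> length cs1" using assms(1) X1 \<open>k1 = LLeaf q1\<close> by simp
      have q2: "q2 \<le> length cs2" using assms(2) X2 LLeaf by simp
      have "v1 = v2" "take q1 cs1 @ Node m [] # drop q1 cs1 = take q2 cs2 @ Node m [] # drop q2 cs2"
        using assms(5) X1 X2 \<open>k1 = LLeaf q1\<close> LLeaf by auto
      moreover have "Node m [] \<notin> set (take q1 cs1)" "Node m [] \<notin> set (drop q1 cs1)"
        using n1 by (auto dest: in_set_takeD in_set_dropD)
      ultimately have "v1 = v2" "take q1 cs1 = take q2 cs2 \<and> drop q1 cs1 = drop q2 cs2"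
        using append_Cons_eq_iff[of "Node m []" "take q1 cs1" "drop q1 cs1" "take q2 cs2" "drop q2 cs2"]
        by blast+
      then have "v1 = v2" "take q1 cs1 = take q2 cs2" "drop q1 cs1 = drop q2 cs2" by blast+
      moreover have "q1 = q2" using \<open>take q1 cs1 = take q2 cs2\<close> q1 q2
        by (metis length_take min.absorb2)
      ultimately show ?thesis using X1 X2 \<open>k1 = LLeaf q1\<close> LLeaf
        by (metis append_take_drop_id)
    qed (use assms(5) X1 X2 \<open>k1 = LLeaf q1\<close> v1m in auto)
  next
    case LEdg
    show ?thesis
    proof (cases k2)
      case (LImpY j)
      then have "j < length cs2" using assms(2) X2 by (simp add: impidx_def)
      then show ?thesis using assms(5) X1 X2 LEdg LImpY by (auto simp: take_Suc_conv_app_nth)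
    next
      case (LImpT j)
      then show ?thesis using assms(5) X1 X2 LEdg by auto
    qed (use assms(5) X1 X2 LEdg v2m in auto)
  next
    case (LImpY j1)
    have j1: "j1 \<in> impidx v1 cs1" using assms(1) X1 LImpY by simp
    note Y1 = impY_last[OF X1 j1 assms(3)]
    show ?thesis
    proof (cases k2)
      case LEdg
      have "j1 < length cs1" using j1 by (simp add: impidx_def)
      then show ?thesis using assms(5) X1 X2 LEdg LImpY by (auto simp: take_Suc_conv_app_nth)
    next
      case (LImpY j2)
      have j2: "j2 \<in> impidx v2 cs2" using assms(2) X2 LImpY by simp
      have jl: "j1 < length cs1" "j2 < length cs2" using j1 j2 by (auto simp: impidx_def)
      have e: "take (Suc j1) cs1 @ [Node v1 (drop (Suc j1) cs1)] = take (Suc j2) cs2 @ [Node v2 (drop (Suc j2) cs2)]"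
        using assms(5) X1 X2 \<open>k1 = LImpY j1\<close> LImpY by simp
      then have "take (Suc j1) cs1 = take (Suc j2) cs2" "v1 = v2" "drop (Suc j1) cs1 = drop (Suc j2) cs2"
        by auto
      moreover have "j1 = j2" using \<open>take (Suc j1) cs1 = take (Suc j2) cs2\<close> jl
        by (metis Suc_inject Suc_leI length_take min.absorb2)
      ultimately show ?thesis using X1 X2 \<open>k1 = LImpY j1\<close> LImpY by (metis append_take_drop_id)
    next
      case (LImpT j2)
      have j2: "j2 \<in> impidx v2 cs2" using assms(2) X2 LImpT by simp
      note S2 = imp_setup[OF X2 j2 assms(4)]
      have "take j1 cs1 @ [cs1 ! j1, Node v1 (drop (Suc j1) cs1)] = take j2 cs2 @ [Node v2 (drop (Suc j2) cs2), cs2 ! j2]"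
        using assms(5) X1 X2 \<open>k1 = LImpY j1\<close> LImpT Y1 by simp
      from two_last[OF this] have "cs1 ! j1 = Node v2 (drop (Suc j2) cs2)" "Node v1 (drop (Suc j1) cs1) = cs2 ! j2"
        by auto
      then show ?thesis using Y1 S2(5) by simp
    qed (use assms(5) X1 X2 LImpY v2m in auto)
  next
    case (LImpT j1)
    have j1: "j1 \<in> impidx v1 cs1" using assms(1) X1 LImpT by simp
    note S1 = imp_setup[OF X1 j1 assms(3)]
    have jl1: "j1 < length cs1" using j1 by (simp add: impidx_def)
    show ?thesis
    proof (cases k2)
      case LEdg
      then show ?thesis using assms(5) X1 X2 LImpT by auto
    next
      case (LImpY j2)
      have j2: "j2 \<in> impidx v2 cs2" using assms(2) X2 LImpY by simp
      note Y2 = impY_last[OF X2 j2 assms(4)]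
      have "take j1 cs1 @ [Node v1 (drop (Suc j1) cs1), cs1 ! j1] = take j2 cs2 @ [cs2 ! j2, Node v2 (drop (Suc j2) cs2)]"
        using assms(5) X1 X2 \<open>k1 = LImpT j1\<close> LImpY Y2 by simp
      from two_last[OF this] have "cs2 ! j2 = Node v1 (drop (Suc j1) cs1)" "Node v2 (drop (Suc j2) cs2) = cs1 ! j1"
        by auto
      then show ?thesis using Y2 S1(5) by simp
    next
      case (LImpT j2)
      have j2: "j2 \<in> impidx v2 cs2" using assms(2) X2 LImpT by simp
      have jl2: "j2 < length cs2" using j2 by (simp add: impidx_def)
      have "take j1 cs1 @ [Node v1 (drop (Suc j1) cs1), cs1 ! j1] = take j2 cs2 @ [Node v2 (drop (Suc j2) cs2), cs2 ! j2]"
        using assms(5) X1 X2 \<open>k1 = LImpT j1\<close> LImpT by simp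
      from two_last[OF this] have t: "take j1 cs1 = take j2 cs2" "v1 = v2" "drop (Suc j1) cs1 = drop (Suc j2) cs2" "cs1 ! j1 = cs2 ! j2"
        by auto
      moreover have "j1 = j2" using t(1) jl1 jl2 by (metis length_take min.absorb2 less_imp_le)
      ultimately have "cs1 = cs2" using id_take_nth_drop[OF jl1] id_take_nth_drop[OF jl2] by metis
      then show ?thesis using X1 X2 \<open>k1 = LImpT j1\<close> LImpT t \<open>j1 = j2\<close> by simp
    qed (use assms(5) X1 X2 LImpT v2m in auto)
  qed
qed

lemma ins_inj:
  "validN X1 p1 k1 \<Longrightarrow> validN X2 p2 k2 \<Longrightarrow> wfm m X1 \<Longrightarrow> wfm m X2 \<Longrightarrow>
   ins m X1 p1 k1 = ins m X2 p2 k2 \<Longrightarrow> X1 = X2 \<and> p1 = p2 \<and> k1 = k2"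
proof (induction p1 arbitrary: X1 X2 p2)
  case Nil
  show ?case
  proof (cases p2)
    case Nil then show ?thesis using loc_inj[of X1 k1 X2 k2 m] Nil.prems by simp
  next
    case (Cons i p)
    then show ?thesis using loc_vs_cons[of X1 k1 X2 i p k2 m] Nil.prems by simp
  qed
next
  case (Cons i1 p1)
  show ?case
  proof (cases p2)
    case Nil
    then show ?thesis using loc_vs_cons[of X2 k2 X1 i1 p1 k1 m] Cons.prems by simp
  next
    case (Cons i2 q2)
    obtain v1 cs1 where X1: "X1 = Node v1 cs1" by (cases X1)
    obtain v2 cs2 where X2: "X2 = Node v2 cs2" by (cases X2)
    have i1: "i1 < length cs1" and vp1: "validN (cs1 ! i1) p1 k1" using Cons.prems(1) X1 by auto
    have i2: "i2 < length cs2" and vp2: "validN (cs2 ! i2) q2 k2" using Cons.prems(2) X2 Cons by auto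
    have w1: "wfm m (cs1 ! i1)" using wfm_child Cons.prems(3) X1 i1 by blast
    have w2: "wfm m (cs2 ! i2)" using wfm_child Cons.prems(4) X2 i2 by blast
    let ?Z1 = "ins m (cs1 ! i1) p1 k1" and ?Z2 = "ins m (cs2 ! i2) q2 k2"
    have e: "v1 = v2" "cs1[i1 := ?Z1] = cs2[i2 := ?Z2]"
      using Cons.prems(5) X1 X2 \<open>p2 = i2 # q2\<close> by auto
    have len: "length cs1 = length cs2" using arg_cong[OF e(2), of length] by simp
    have ii: "i1 = i2"
    proof (rule ccontr)
      assume ne: "i1 \<noteq> i2"
      have "?Z1 = cs2 ! i1" using arg_cong[OF e(2), of "\<lambda>l. l ! i1"] ne i1 by simp
      moreover have "m \<in> set (labels ?Z1)" using ins_has_m[OF vp1] .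
      moreover have "wfm m (cs2 ! i1)" using wfm_child Cons.prems(4) X2 i1 len by auto
      ultimately show False using m_notin by metis
    qed
    have "?Z1 = ?Z2" using arg_cong[OF e(2), of "\<lambda>l. l ! i1"] ii i1 i2 by simp
    from Cons.IH[OF vp1 vp2 w1 w2 this] have ih: "cs1 ! i1 = cs2 ! i2" "p1 = q2" "k1 = k2" by auto
    have "cs1 = cs2"
    proof -
      have "cs1 = (cs1[i1 := ?Z1])[i1 := cs1 ! i1]" by simp
      also have "\<dots> = (cs2[i2 := ?Z2])[i2 := cs2 ! i2]" using e(2) ii ih(1) by simp
      also have "\<dots> = cs2" by simp
      finally show ?thesis .
    qed
    then show ?thesis using X1 X2 e(1) ii ih Cons by simp
  qed
qed

lemma wfm_from:
  assumes "mset (labels Y) = add_mset m (mset (labels X))" "distinct (labels Y)" "\<forall>l\<in>set (labels Y). l \<le> m"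
  shows "wfm m X"
proof -
  have "mset (labels Y) = mset (m # labels X)" using assms(1) by simp
  then have d: "distinct (m # labels X)" using assms(2) by (metis mset_eq_imp_distinct_iff)
  have s: "set (labels Y) = insert m (set (labels X))"
    using arg_cong[OF assms(1), of set_mset] by simp
  show ?thesis using d s assms(3) unfolding wfm_def by (auto simp: le_less)
qed

lemma distinct_child: "distinct (labels (Node v cs)) \<Longrightarrow> i < length cs \<Longrightarrow> distinct (labels (cs ! i))"
proof -
  assume w: "distinct (labels (Node v cs))" and i: "i < length cs"
  have b: "cs = take i cs @ cs ! i # drop (Suc i) cs" by (rule id_take_nth_drop[OF i])
  have "distinct (concat (map labels (take i cs @ cs ! i # drop (Suc i) cs)))"
    using w b by (metis distinct.simps(2) labels.simps)
  then show "distinct (labels (cs ! i))" by simp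
qed

lemma not_elder_app: "\<forall>x\<in>set K. \<not> beta x < beta c \<Longrightarrow> \<not> elder (A @ c # K) (length A)"
proof
  assume a: "\<forall>x\<in>set K. \<not> beta x < beta c" and "elder (A @ c # K) (length A)"
  then obtain l where l: "length A < l" "l < length (A @ c # K)" "beta ((A @ c # K) ! l) < beta ((A @ c # K) ! length A)"
    unfolding elder_def by blast
  obtain l' where l': "l = Suc (length A) + l'" using l(1) by (metis less_imp_Suc_add add_Suc)
  have "(A @ c # K) ! l = K ! l'" using l' by (simp add: nth_append)
  moreover have "l' < length K" using l l' by simp
  ultimately show False using a l(3) by (auto simp: nth_append dest!: nth_mem)
qed

lemma beta_sub: "x \<in> set K \<Longrightarrow> beta (Node w K) \<le> beta x"
  by (rule beta_le) (use beta_in[of x] in auto)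

lemma beta_root_le: "beta (Node w K) \<le> w"
  by (rule beta_le) simp

lemma take_last2: "2 \<le> length ss \<Longrightarrow> ss = take (length ss - 2) ss @ [ss ! (length ss - 2), ss ! Suc (length ss - 2)]"
proof -
  assume "2 \<le> length ss"
  then obtain j where j: "length ss = Suc (Suc j)" by (metis add_2_eq_Suc le_Suc_ex)
  have "ss = take j ss @ drop j ss" by simp
  moreover have "drop j ss = [ss ! j, ss ! Suc j]"
    using j by (metis Cons_nth_drop_Suc drop_all lessI Suc_lessD le_refl)
  ultimately show ?thesis using j by simp
qed

lemma surj_root_m:
  assumes d: "distinct (labels (Node m ss))" and ne: "ss \<noteq> []"
  shows "\<exists>X k. lvalid X k \<and> loc m X k = Node m ss"
proof (cases "length ss = 1")
  case True
  then obtain s where ss: "ss = [s]" by (cases ss) auto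
  obtain w K where s: "s = Node w K" by (cases s)
  show ?thesis by (rule exI[of _ s], rule exI[of _ LEdg]) (simp add: ss s)
next
  case False
  have "length ss \<noteq> 0" using ne by simp
  then have two: "2 \<le> length ss" using False by linarith
  define j where "j = length ss - 2"
  define a where "a = ss ! j"
  define b where "b = ss ! Suc j"
  have ss: "ss = take j ss @ [a, b]" using take_last2[OF two] unfolding j_def a_def b_def .
  have lj: "length (take j ss) = j" using two j_def by simp
  have jl: "j < length ss" "Suc j < length ss" using two j_def by auto
  have ab: "beta a \<noteq> beta b" using beta_neq[OF d jl] unfolding a_def b_def by simp
  show ?thesis
  proof (cases "beta a < beta b")
    case True
    obtain w K where b: "b = Node w K" by (cases b)
    define cs where "cs = take j ss @ a # K"
    have nE: "\<not> elder cs j"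
      unfolding cs_def using not_elder_app[of K a "take j ss"] lj True b beta_sub[of _ K w] by force
    have "beta a < w" using True b beta_root_le[of w K] by simp
    then have "j \<in> impidx w cs" using nE lj by (simp add: impidx_def cs_def nth_append)
    moreover have "loc m (Node w cs) (LImpY j) = Node m ss"
    proof -
      have "take (Suc j) cs = take j ss @ [a]" using lj by (simp add: cs_def take_Suc_conv_app_nth nth_append)
      moreover have "drop (Suc j) cs = K" using lj by (simp add: cs_def)
      ultimately show ?thesis using ss b by simp
    qed
    ultimately show ?thesis by (intro exI[of _ "Node w cs"] exI[of _ "LImpY j"]) simp
  next
    case False
    then have ba: "beta b < beta a" using ab by simp
    obtain w K where a: "a = Node w K" by (cases a)
    define cs where "cs = take j ss @ b # K"
    have nE: "\<not> elder cs j"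
      unfolding cs_def using not_elder_app[of K b "take j ss"] lj ba a beta_sub[of _ K w] by force
    have "beta b < w" using ba a beta_root_le[of w K] by simp
    then have "j \<in> impidx w cs" using nE lj by (simp add: impidx_def cs_def nth_append)
    moreover have "loc m (Node w cs) (LImpT j) = Node m ss"
    proof -
      have "take j cs = take j ss" using lj by (simp add: cs_def)
      moreover have "drop (Suc j) cs = K" using lj by (simp add: cs_def)
      moreover have "cs ! j = b" using lj by (simp add: cs_def nth_append)
      ultimately show ?thesis using ss a by simp
    qed
    ultimately show ?thesis by (intro exI[of _ "Node w cs"] exI[of _ "LImpT j"]) simp
  qed
qed

lemma ins_surj0:
  "distinct (labels Y) \<Longrightarrow> \<forall>l\<in>set (labels Y). l \<le> m \<Longrightarrow> m \<in> set (labels Y) \<Longrightarrow> Y \<noteq> Node m []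
   \<Longrightarrow> \<exists>X p k. validN X p k \<and> ins m X p k = Y"
proof (induction Y)
  case (Node v ss)
  show ?case
  proof (cases "v = m")
    case True
    have "ss \<noteq> []" using Node.prems(4) True by auto
    from surj_root_m[OF Node.prems(1)[unfolded True] this] obtain X k where "lvalid X k" "loc m X k = Node m ss"
      by blast
    then show ?thesis using True by (intro exI[of _ X] exI[of _ "[]"] exI[of _ k]) simp
  next
    case False
    then obtain s where "s \<in> set ss" "m \<in> set (labels s)"
      using Node.prems(3) by auto
    then obtain i where i: "i < length ss" "m \<in> set (labels (ss ! i))"
      by (metis in_set_conv_nth)
    show ?thesis
    proof (cases "ss ! i = Node m []")
      case True
      define cs where "cs = take i ss @ drop (Suc i) ss"
      have li: "length (take i ss) = i" using i by simp
      have "lvalid (Node v cs) (LLeaf i)" using i by (simp add: cs_def)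
      moreover have "loc m (Node v cs) (LLeaf i) = Node v ss"
      proof -
        have "take i cs = take i ss" "drop i cs = drop (Suc i) ss" using li by (simp_all add: cs_def)
        then show ?thesis using id_take_nth_drop[OF i(1)] True by simp
      qed
      ultimately show ?thesis by (intro exI[of _ "Node v cs"] exI[of _ "[]"] exI[of _ "LLeaf i"]) simp
    next
      case False
      have "ss ! i \<in> set ss" using i by simp
      moreover have "distinct (labels (ss ! i))" using distinct_child[OF Node.prems(1) i(1)] .
      moreover have "\<forall>l\<in>set (labels (ss ! i)). l \<le> m" using Node.prems(2) i(1) by (auto dest!: nth_mem)
      ultimately obtain X' p k where X': "validN X' p k" "ins m X' p k = ss ! i"
        using Node.IH[of "ss ! i"] i(2) False by blast
      have "validN (Node v (ss[i := X'])) (i # p) k" using X' i by simp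
      moreover have "ins m (Node v (ss[i := X'])) (i # p) k = Node v ss" using X' i by simp
      ultimately show ?thesis by blast
    qed
  qed
qed

lemma ins_surj:
  "distinct (labels Y) \<Longrightarrow> \<forall>l\<in>set (labels Y). l \<le> m \<Longrightarrow> m \<in> set (labels Y) \<Longrightarrow> Y \<noteq> Node m []
   \<Longrightarrow> \<exists>X p k. validN X p k \<and> wfm m X \<and> ins m X p k = Y"
proof -
  assume a: "distinct (labels Y)" "\<forall>l\<in>set (labels Y). l \<le> m" "m \<in> set (labels Y)" "Y \<noteq> Node m []"
  from ins_surj0[OF a] obtain X p k where X: "validN X p k" "ins m X p k = Y" by blast
  have "wfm m X" using wfm_from[OF _ a(1,2)] ins_mset[OF X(1), of m] X(2) by simp
  then show ?thesis using X by blast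
qed

lemma validN_split:
  "{(p, k). validN (Node v cs) p k \<and> PP p k} =
    (\<lambda>k. ([], k)) ` {k. lvalid (Node v cs) k \<and> PP [] k} \<union>
    (\<Union>i\<in>{..<length cs}. (\<lambda>(p, k). (i # p, k)) ` {(p, k). validN (cs ! i) p k \<and> PP (i # p) k})"
proof (rule set_eqI)
  fix x :: "nat list \<times> lop"
  obtain p k where x: "x = (p, k)" by (cases x)
  show "x \<in> {(p, k). validN (Node v cs) p k \<and> PP p k} \<longleftrightarrow>
    x \<in> (\<lambda>k. ([], k)) ` {k. lvalid (Node v cs) k \<and> PP [] k} \<union>
    (\<Union>i\<in>{..<length cs}. (\<lambda>(p, k). (i # p, k)) ` {(p, k). validN (cs ! i) p k \<and> PP (i # p) k})"
    unfolding x by (cases p) (auto simp: image_iff)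
qed

lemma card_split:
  assumes fin: "\<And>i. i < length cs \<Longrightarrow> finite {(p, k). validN (cs ! i) p k \<and> PP (i # p) k}"
    and finl: "finite {k. lvalid (Node v cs) k \<and> PP [] k}"
  shows "card {(p, k). validN (Node v cs) p k \<and> PP p k} =
    card {k. lvalid (Node v cs) k \<and> PP [] k} + (\<Sum>i<length cs. card {(p, k). validN (cs ! i) p k \<and> PP (i # p) k})"
    "finite {(p, k). validN (Node v cs) p k \<and> PP p k}"
proof -
  let ?A = "(\<lambda>k. ([], k)) ` {k. lvalid (Node v cs) k \<and> PP [] k}"
  let ?F = "\<lambda>i. (\<lambda>(p, k). (i # p, k)) ` {(p, k). validN (cs ! i) p k \<and> PP (i # p) k}"
  have fA: "finite ?A" using finl by simp
  have fF: "\<And>i. i \<in> {..<length cs} \<Longrightarrow> finite (?F i)" using fin by simp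
  have fU: "finite (\<Union>i\<in>{..<length cs}. ?F i)" using fF by blast
  have disj: "?A \<inter> (\<Union>i\<in>{..<length cs}. ?F i) = {}" by auto
  have cA: "card ?A = card {k. lvalid (Node v cs) k \<and> PP [] k}"
    by (rule card_image) (auto simp: inj_on_def)
  have cF: "\<And>i. card (?F i) = card {(p, k). validN (cs ! i) p k \<and> PP (i # p) k}"
    by (rule card_image) (auto simp: inj_on_def)
  have cU: "card (\<Union>i\<in>{..<length cs}. ?F i) = (\<Sum>i<length cs. card (?F i))"
    by (rule card_UN_disjoint) (use fF in auto)
  show "card {(p, k). validN (Node v cs) p k \<and> PP p k} =
    card {k. lvalid (Node v cs) k \<and> PP [] k} + (\<Sum>i<length cs. card {(p, k). validN (cs ! i) p k \<and> PP (i # p) k})"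
    unfolding validN_split card_Un_disjoint[OF fA fU disj] cA cU cF ..
  show "finite {(p, k). validN (Node v cs) p k \<and> PP p k}"
    unfolding validN_split using fA fU by blast
qed

lemma lvalid_fin: "finite {k. lvalid (Node v cs) k \<and> PP k}"
proof -
  have "{k. lvalid (Node v cs) k \<and> PP k} \<subseteq> LLeaf ` {..length cs} \<union> {LEdg} \<union> LImpY ` impidx v cs \<union> LImpT ` impidx v cs"
  proof
    fix k assume "k \<in> {k. lvalid (Node v cs) k \<and> PP k}"
    then show "k \<in> LLeaf ` {..length cs} \<union> {LEdg} \<union> LImpY ` impidx v cs \<union> LImpT ` impidx v cs"
      by (cases k) auto
  qed
  moreover have "finite (impidx v cs)" unfolding impidx_def by simp
  ultimately show ?thesis by (meson finite_Un finite_imageI finite_atMost finite.intros finite_subset)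
qed

lemma validN_fin: "finite {(p, k). validN X p k \<and> PP p k}"
proof (induction X arbitrary: PP)
  case (Node v cs)
  show ?case
    by (rule card_split(2)) (use Node.IH lvalid_fin in \<open>auto dest!: nth_mem\<close>)
qed

definition cnt :: "ptree \<Rightarrow> ty \<Rightarrow> nat" where
  "cnt X T = card {(p, k). validN X p k \<and> tyN X p k = T}"

lemma cnt_split: "cnt (Node v cs) T = card {k. lvalid (Node v cs) k \<and> lty (Node v cs) k = T} + (\<Sum>i<length cs. cnt (cs ! i) T)"
  unfolding cnt_def
  by (subst card_split(1)) (auto intro: validN_fin lvalid_fin)

lemma loc_TN: "{k. lvalid (Node v cs) k \<and> lty (Node v cs) k = TN} = {LLeaf (length cs)}"
  by (rule set_eqI, case_tac x) auto

lemma loc_TY: "{k. lvalid (Node v cs) k \<and> lty (Node v cs) k = TY} = insert LEdg (LImpY ` impidx v cs)"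
  by (rule set_eqI, case_tac x) auto

lemma loc_TT: "{k. lvalid (Node v cs) k \<and> lty (Node v cs) k = TT} = LLeaf ` {..<length cs} \<union> LImpT ` impidx v cs"
  by (rule set_eqI, case_tac x) auto

lemma card_TY: "card (insert LEdg (LImpY ` impidx v cs)) = Suc (card (impidx v cs))"
proof -
  have "finite (impidx v cs)" unfolding impidx_def by simp
  then show ?thesis by (subst card_insert_disjoint) (auto simp: card_image inj_on_def)
qed

lemma card_TT: "card (LLeaf ` {..<length cs} \<union> LImpT ` impidx v cs) = length cs + card (impidx v cs)"
proof -
  have "finite (impidx v cs)" unfolding impidx_def by simp
  then show ?thesis by (subst card_Un_disjoint) (auto simp: card_image inj_on_def)
qed

lemma sum_nth_list: "(\<Sum>i<length cs. f (cs ! i)) = sum_list (map f cs)"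
  by (simp add: sum_list_sum_nth atLeast0LessThan)

lemma length_labels_Node: "length (labels (Node v cs)) = Suc (sum_list (map (\<lambda>c. length (labels c)) cs))"
  by (simp add: length_concat comp_def)

lemma improper_Node2: "improper (Node v cs) = card (impidx v cs) + sum_list (map improper cs)"
  by (simp add: improper.simps impidx_def)

lemma counts:
  "cnt X TN = length (labels X) \<and> cnt X TY = length (labels X) + improper X \<and>
   cnt X TT + 1 = length (labels X) + improper X"
proof (induction X)
  case (Node v cs)
  have ih: "\<And>i. i < length cs \<Longrightarrow> cnt (cs ! i) TN = length (labels (cs ! i)) \<and>
      cnt (cs ! i) TY = length (labels (cs ! i)) + improper (cs ! i) \<and>
      cnt (cs ! i) TT + 1 = length (labels (cs ! i)) + improper (cs ! i)"
    using Node.IH by (auto dest!: nth_mem)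
  have sN: "(\<Sum>i<length cs. cnt (cs ! i) TN) = sum_list (map (\<lambda>c. length (labels c)) cs)"
    using ih by (simp add: sum_nth_list[symmetric])
  have sY: "(\<Sum>i<length cs. cnt (cs ! i) TY) = sum_list (map (\<lambda>c. length (labels c)) cs) + sum_list (map improper cs)"
    using ih by (simp add: sum_nth_list[symmetric] sum.distrib)
  have "(\<Sum>i<length cs. cnt (cs ! i) TT + 1) = sum_list (map (\<lambda>c. length (labels c)) cs) + sum_list (map improper cs)"
    using ih by (simp add: sum_nth_list[symmetric] sum.distrib del: Suc_eq_plus1 add_2_eq_Suc')
  then have sT: "(\<Sum>i<length cs. cnt (cs ! i) TT) + length cs = sum_list (map (\<lambda>c. length (labels c)) cs) + sum_list (map improper cs)"
  proof -
    assume h: "(\<Sum>i<length cs. cnt (cs ! i) TT + 1) = sum_list (map (\<lambda>c. length (labels c)) cs) + sum_list (map improper cs)"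
    have "(\<Sum>i<length cs. cnt (cs ! i) TT + 1) = (\<Sum>i<length cs. cnt (cs ! i) TT) + length cs"
      by (simp only: sum.distrib) simp
    then show ?thesis using h by simp
  qed
  show ?case
    unfolding cnt_split loc_TN loc_TY loc_TT card_TY card_TT length_labels_Node improper_Node2
    using sN sY sT by simp
qed

definition OT :: "nat \<Rightarrow> ptree set" where
  "OT N = {T. distinct (labels T) \<and> set (labels T) = {1..N} \<and> root T = 1}"

definition validR :: "ptree \<Rightarrow> nat list \<Rightarrow> lop \<Rightarrow> bool" where
  "validR T p k \<longleftrightarrow> validN T p k \<and> (p = [] \<longrightarrow> (\<exists>q. k = LLeaf q))"

definition isX :: "ptree \<Rightarrow> nat list \<Rightarrow> lop \<Rightarrow> bool" where
  "isX T p k \<longleftrightarrow> p = [] \<and> k = LLeaf (length (kids T))"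

lemma root_card_gen:
  assumes "\<And>k. lvalid (Node v cs) k \<Longrightarrow> (\<exists>q. k = LLeaf q) \<Longrightarrow> C [] k = L k"
  and "\<And>i p k. C (i # p) k = D i p k"
  shows "card {(p, k). validR (Node v cs) p k \<and> C p k} =
    card {k. lvalid (Node v cs) k \<and> (\<exists>q. k = LLeaf q) \<and> L k} +
    (\<Sum>i<length cs. card {(p, k). validN (cs ! i) p k \<and> D i p k})"
proof -
  have "card {(p, k). validR (Node v cs) p k \<and> C p k} =
        card {(p, k). validN (Node v cs) p k \<and> ((p = [] \<longrightarrow> (\<exists>q. k = LLeaf q)) \<and> C p k)}"
    unfolding validR_def by (simp add: conj_assoc)
  also have "\<dots> = card {k. lvalid (Node v cs) k \<and> ((\<exists>q. k = LLeaf q) \<and> C [] k)} +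
    (\<Sum>i<length cs. card {(p, k). validN (cs ! i) p k \<and> ((i # p = [] \<longrightarrow> (\<exists>q. k = LLeaf q)) \<and> C (i # p) k)})"
    using card_split(1)[where PP = "\<lambda>p k. (p = [] \<longrightarrow> (\<exists>q. k = LLeaf q)) \<and> C p k" and cs = cs and v = v]
    by (simp add: validN_fin lvalid_fin)
  also have "{k. lvalid (Node v cs) k \<and> ((\<exists>q. k = LLeaf q) \<and> C [] k)} = {k. lvalid (Node v cs) k \<and> (\<exists>q. k = LLeaf q) \<and> L k}"
    using assms(1) by blast
  finally show ?thesis using assms(2) by simp
qed

lemma sum_le_len: "(\<Sum>i<length cs. cnt (cs ! i) TN) = sum_list (map (\<lambda>c. length (labels c)) cs)"
  using counts by (simp add: sum_nth_list[symmetric])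

lemma root_counts:
  assumes T: "T = Node v cs"
  shows "card {(p, k). validR T p k \<and> isX T p k} = 1"
    "card {(p, k). validR T p k \<and> tyN T p k = TN \<and> \<not> isX T p k} = sum_list (map (\<lambda>c. length (labels c)) cs)"
    "card {(p, k). validR T p k \<and> tyN T p k = TY} = sum_list (map (\<lambda>c. length (labels c)) cs) + sum_list (map improper cs)"
    "card {(p, k). validR T p k \<and> tyN T p k = TT} = sum_list (map (\<lambda>c. length (labels c)) cs) + sum_list (map improper cs)"
proof -
  have e1: "{k. lvalid (Node v cs) k \<and> (\<exists>q. k = LLeaf q) \<and> k = LLeaf (length cs)} = {LLeaf (length cs)}" by auto
  show "card {(p, k). validR T p k \<and> isX T p k} = 1"
    unfolding T by (subst root_card_gen[where L = "\<lambda>k. k = LLeaf (length cs)" and D = "\<lambda>i p k. False"])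
       (auto simp: isX_def e1)
  have e2: "{k. lvalid (Node v cs) k \<and> (\<exists>q. k = LLeaf q) \<and> (lty (Node v cs) k = TN \<and> k \<noteq> LLeaf (length cs))} = {}" by (auto split: if_splits)
  show "card {(p, k). validR T p k \<and> tyN T p k = TN \<and> \<not> isX T p k} = sum_list (map (\<lambda>c. length (labels c)) cs)"
    unfolding T
    by (subst root_card_gen[where L = "\<lambda>k. lty (Node v cs) k = TN \<and> k \<noteq> LLeaf (length cs)" and D = "\<lambda>i p k. tyN (cs ! i) p k = TN"])
       (auto simp: isX_def e2 sum_le_len[symmetric] cnt_def)
  have e3: "{k. lvalid (Node v cs) k \<and> (\<exists>q. k = LLeaf q) \<and> lty (Node v cs) k = TY} = {}" by (auto split: if_splits)
  have sY: "(\<Sum>i<length cs. cnt (cs ! i) TY) = sum_list (map (\<lambda>c. length (labels c)) cs) + sum_list (map improper cs)"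
    using counts by (simp add: sum_nth_list[symmetric] sum.distrib)
  show "card {(p, k). validR T p k \<and> tyN T p k = TY} = sum_list (map (\<lambda>c. length (labels c)) cs) + sum_list (map improper cs)"
    unfolding T
    by (subst root_card_gen[where L = "\<lambda>k. lty (Node v cs) k = TY" and D = "\<lambda>i p k. tyN (cs ! i) p k = TY"])
       (auto simp: e3 sY[symmetric] cnt_def)
  have e4: "{k. lvalid (Node v cs) k \<and> (\<exists>q. k = LLeaf q) \<and> lty (Node v cs) k = TT} = LLeaf ` {..<length cs}"
    by (rule set_eqI, case_tac x) auto
  have "(\<Sum>i<length cs. cnt (cs ! i) TT + 1) = sum_list (map (\<lambda>c. length (labels c)) cs) + sum_list (map improper cs)"
    using counts by (simp add: sum_nth_list[symmetric] sum.distrib del: Suc_eq_plus1 add_2_eq_Suc')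
  moreover have "(\<Sum>i<length cs. cnt (cs ! i) TT + 1) = (\<Sum>i<length cs. cnt (cs ! i) TT) + length cs"
    by (simp only: sum.distrib) simp
  ultimately have sT: "length cs + (\<Sum>i<length cs. cnt (cs ! i) TT) = sum_list (map (\<lambda>c. length (labels c)) cs) + sum_list (map improper cs)"
    by simp
  have cl: "card (LLeaf ` {..<length cs}) = length cs" by (simp add: card_image inj_on_def)
  show "card {(p, k). validR T p k \<and> tyN T p k = TT} = sum_list (map (\<lambda>c. length (labels c)) cs) + sum_list (map improper cs)"
    unfolding T
    by (subst root_card_gen[where L = "\<lambda>k. lty (Node v cs) k = TT" and D = "\<lambda>i p k. tyN (cs ! i) p k = TT"])
       (auto simp: e4 cl sT[symmetric] cnt_def)
qed

lemma OT_wfm: "T \<in> OT (Suc n) \<Longrightarrow> wfm (Suc (Suc n)) T"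
  by (auto simp: OT_def wfm_def)

lemma OT_Node: "T \<in> OT N \<Longrightarrow> \<exists>cs. T = Node 1 cs"
  by (cases T) (auto simp: OT_def)

lemma OT_imp: assumes "Node v cs \<in> OT N" shows "improper (Node v cs) = sum_list (map improper cs)"
proof -
  have d: "distinct (labels (Node v cs))" and s: "set (labels (Node v cs)) = {1..N}" and v: "v = 1"
    using assms by (auto simp: OT_def)
  have "impidx v cs = {}"
  proof (rule ccontr)
    assume "impidx v cs \<noteq> {}"
    then obtain j where j: "j < length cs" "\<not> v < beta (cs ! j)" by (auto simp: impidx_def)
    have "beta (cs ! j) \<in> set (labels (Node v cs))" using beta_in[of "cs ! j"] j(1) by (auto dest!: nth_mem)
    then have "1 \<le> beta (cs ! j)" using s by auto
    moreover have "beta (cs ! j) \<noteq> v" using beta_neq_root[OF d j(1)] .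
    ultimately show False using j(2) v by simp
  qed
  then show ?thesis by (simp add: improper_Node2)
qed

lemma OT_len: assumes "Node v cs \<in> OT (Suc n)" shows "sum_list (map (\<lambda>c. length (labels c)) cs) = n"
proof -
  have "distinct (labels (Node v cs))" using assms unfolding OT_def by blast
  then have "length (labels (Node v cs)) = card (set (labels (Node v cs)))"
    by (simp only: distinct_card)
  also have "set (labels (Node v cs)) = {1..Suc n}" using assms unfolding OT_def by blast
  also have "card {1..Suc n} = Suc n" by simp
  finally show ?thesis by (simp add: length_concat comp_def)
qed

lemma ins_OT:
  assumes "T \<in> OT (Suc n)" "validR T p k"
  shows "ins (Suc (Suc n)) T p k \<in> OT (Suc (Suc n))"
proof -
  let ?m = "Suc (Suc n)"
  have v: "validN T p k" using assms(2) by (simp add: validR_def)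
  note ms = ins_mset[OF v, of ?m]
  have w: "wfm ?m T" using OT_wfm[OF assms(1)] .
  have d: "distinct (labels (ins ?m T p k))" using wfm_add(1)[OF ms w] .
  have "set (labels (ins ?m T p k)) = insert ?m (set (labels T))"
    using arg_cong[OF ms, of set_mset] by simp
  also have "\<dots> = {1..?m}" using assms(1) by (auto simp: OT_def)
  finally have s: "set (labels (ins ?m T p k)) = {1..?m}" .
  have r: "root (ins ?m T p k) = 1"
  proof (cases p)
    case Nil
    then obtain q where "k = LLeaf q" using assms(2) by (auto simp: validR_def)
    then show ?thesis using Nil loc_leaf_root assms(1) by (simp add: OT_def)
  next
    case (Cons i p')
    then show ?thesis using ins_cons_root assms(1) by (simp add: OT_def)
  qed
  show ?thesis using d s r by (simp add: OT_def)
qed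

lemma ins_yr:
  assumes "T \<in> OT (Suc n)" "validR T p k"
  shows "young_root (ins (Suc (Suc n)) T p k) = young_root T + (if isX T p k then 1 else 0)"
proof -
  let ?m = "Suc (Suc n)"
  obtain cs where T: "T = Node 1 cs" using OT_Node[OF assms(1)] by blast
  have w: "wfm ?m T" using OT_wfm[OF assms(1)] .
  show ?thesis
  proof (cases p)
    case Nil
    then obtain q where k: "k = LLeaf q" using assms(2) by (auto simp: validR_def)
    have q: "q \<le> length cs" using assms(2) Nil k T by (simp add: validR_def)
    show ?thesis using loc_Leaf(3)[OF T q w] Nil k T
      by (simp add: young_root_def eldc_eq isX_def)
  next
    case (Cons i p')
    have i: "i < length cs" and vp: "validN (cs ! i) p' k" using assms(2) Cons T by (auto simp: validR_def)
    have wc: "wfm ?m (cs ! i)" using wfm_child w T i by blast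
    let ?Z = "ins ?m (cs ! i) p' k"
    have bz: "beta ?Z = beta (cs ! i)" using ins_beta[OF vp wc] .
    have mb: "map beta (cs[i := ?Z]) = map beta cs"
    proof -
      have "(map beta cs)[i := beta (cs ! i)] = map beta cs" by (metis list_update_id nth_map i)
      then show ?thesis using bz by (simp add: map_update)
    qed
    show ?thesis using Cons T mb by (simp add: young_root_def eldc_eq isX_def)
  qed
qed

lemma ins_st:
  assumes "T \<in> OT (Suc n)" "validR T p k"
  shows "improper (ins (Suc (Suc n)) T p k) = improper T + (if tyN T p k = TY then 1 else 0)"
    "eld (ins (Suc (Suc n)) T p k) = eld T + (if tyN T p k = TT then 1 else 0)"
  using ins_stats[of T p k "Suc (Suc n)"] assms OT_wfm[OF assms(1)] by (auto simp: validR_def)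

lemma isX_TN: "isX T p k \<Longrightarrow> tyN T p k = TN"
  by (cases T) (auto simp: isX_def)

lemma OT_surj:
  assumes "Y \<in> OT (Suc (Suc n))"
  shows "\<exists>T p k. T \<in> OT (Suc n) \<and> validR T p k \<and> ins (Suc (Suc n)) T p k = Y"
proof -
  let ?m = "Suc (Suc n)"
  have d: "distinct (labels Y)" and s: "set (labels Y) = {1..?m}" and r: "root Y = 1"
    using assms by (auto simp: OT_def)
  have "Y \<noteq> Node ?m []" using r by auto
  then obtain X p k where X: "validN X p k" "wfm ?m X" "ins ?m X p k = Y"
    using ins_surj[OF d, of ?m] s by auto
  have ms: "set (labels Y) = insert ?m (set (labels X))"
    using arg_cong[OF ins_mset[OF X(1), of ?m], of set_mset] X(3) by simp
  have sX: "set (labels X) = {1..Suc n}"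
  proof -
    have "?m \<notin> set (labels X)" using X(2) by (auto simp: wfm_def)
    then have "set (labels X) = set (labels Y) - {?m}" using ms by auto
    also have "\<dots> = {1..Suc n}" using s by auto
    finally show ?thesis .
  qed
  have vr: "validR X p k \<and> root X = 1"
  proof (cases p)
    case Nil
    show ?thesis
    proof (cases "\<exists>q. k = LLeaf q")
      case True
      then show ?thesis using Nil X loc_leaf_root r by (auto simp: validR_def)
    next
      case False
      then have "root Y = ?m" using loc_root_m[of k ?m X] X(3) Nil by auto
      then show ?thesis using r by simp
    qed
  next
    case (Cons i p')
    then show ?thesis using X ins_cons_root r by (auto simp: validR_def)
  qed
  have "X \<in> OT (Suc n)" using X(2) sX vr by (simp add: OT_def wfm_def)
  then show ?thesis using vr X(3) by blast
qed

lemma OT_one: "OT (Suc 0) = {Node 1 []}"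
proof
  show "{Node 1 []} \<subseteq> OT (Suc 0)" by (simp add: OT_def)
  show "OT (Suc 0) \<subseteq> {Node 1 []}"
  proof
    fix T assume T: "T \<in> OT (Suc 0)"
    obtain cs where c: "T = Node 1 cs" using OT_Node[OF T] by blast
    have "distinct (1 # concat (map labels cs))" "set (1 # concat (map labels cs)) = {1}"
      using T c by (auto simp: OT_def)
    then have "concat (map labels cs) = []"
    proof -
      assume a: "distinct (1 # concat (map labels cs))" "set (1 # concat (map labels cs)) = {1}"
      show ?thesis
      proof (rule ccontr)
        assume "concat (map labels cs) \<noteq> []"
        then obtain x where x: "x \<in> set (concat (map labels cs))" by (meson list.set_sel(1))
        then have "x = 1" using a(2) by auto
        then show False using a(1) x by simp
      qed
    qed
    then have "cs = []" by (cases cs) auto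
    then show "T \<in> {Node 1 []}" using c by simp
  qed
qed

lemma OT_fin: "finite (OT (Suc n))"
proof (induction n)
  case 0 then show ?case by (simp add: OT_one)
next
  case (Suc n)
  let ?F = "\<lambda>(T, pk). ins (Suc (Suc n)) T (fst pk) (snd pk)"
  have "OT (Suc (Suc n)) \<subseteq> ?F ` (SIGMA T:OT (Suc n). {(p, k). validR T p k})"
  proof
    fix Y assume "Y \<in> OT (Suc (Suc n))"
    then obtain T p k where "T \<in> OT (Suc n)" "validR T p k" "ins (Suc (Suc n)) T p k = Y"
      using OT_surj by blast
    then show "Y \<in> ?F ` (SIGMA T:OT (Suc n). {(p, k). validR T p k})"
      by (intro image_eqI[of _ _ "(T, (p, k))"]) auto
  qed
  moreover have "finite (SIGMA T:OT (Suc n). {(p, k). validR T p k})"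
    using Suc.IH validN_fin[where PP = "\<lambda>p k. (p = [] \<longrightarrow> (\<exists>q. k = LLeaf q))"]
    by (intro finite_SigmaI) (auto simp: validR_def)
  ultimately show ?case by (meson finite_surj)
qed

definition G :: "nat \<Rightarrow> nat \<Rightarrow> nat \<Rightarrow> nat \<Rightarrow> nat" where
  "G n k a d = card {T \<in> OT (Suc n). improper T = k \<and> young_root T = a \<and> eld T = d}"

lemma sum_if_const: "finite A \<Longrightarrow> (\<Sum>T\<in>A. if P T then (c::nat) else 0) = c * card {T\<in>A. P T}"
  by (simp add: sum.inter_filter[symmetric])

lemma per_T:
  assumes T: "T \<in> OT (Suc n)"
  shows "card {(p, q). validR T p q \<and> improper (ins (Suc (Suc n)) T p q) = k \<and>
            young_root (ins (Suc (Suc n)) T p q) = a \<and> eld (ins (Suc (Suc n)) T p q) = d} =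
     (if improper T = k \<and> Suc (young_root T) = a \<and> eld T = d then 1 else 0)
   + (if improper T = k \<and> young_root T = a \<and> eld T = d then n else 0)
   + (if Suc (improper T) = k \<and> young_root T = a \<and> eld T = d then n + improper T else 0)
   + (if improper T = k \<and> young_root T = a \<and> Suc (eld T) = d then n + improper T else 0)"
proof -
  let ?m = "Suc (Suc n)"
  obtain cs where Tc: "T = Node 1 cs" using OT_Node[OF T] by blast
  have len: "sum_list (map (\<lambda>c. length (labels c)) cs) = n" using OT_len T Tc by blast
  have imp: "sum_list (map improper cs) = improper T" using OT_imp T Tc by metis
  note rc = root_counts[OF Tc, unfolded len imp]
  define cX where "cX = (improper T = k \<and> Suc (young_root T) = a \<and> eld T = d)"
  define cN where "cN = (improper T = k \<and> young_root T = a \<and> eld T = d)"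
  define cY where "cY = (Suc (improper T) = k \<and> young_root T = a \<and> eld T = d)"
  define cT where "cT = (improper T = k \<and> young_root T = a \<and> Suc (eld T) = d)"
  define S1 where "S1 = {(p, q). validR T p q \<and> isX T p q}"
  define S2 where "S2 = {(p, q). validR T p q \<and> tyN T p q = TN \<and> \<not> isX T p q}"
  define S3 where "S3 = {(p, q). validR T p q \<and> tyN T p q = TY}"
  define S4 where "S4 = {(p, q). validR T p q \<and> tyN T p q = TT}"
  have st: "\<And>p q. validR T p q \<Longrightarrow>
     (improper (ins ?m T p q) = k \<and> young_root (ins ?m T p q) = a \<and> eld (ins ?m T p q) = d) =
     (improper T + (if tyN T p q = TY then 1 else 0) = k \<and> young_root T + (if isX T p q then 1 else 0) = a
       \<and> eld T + (if tyN T p q = TT then 1 else 0) = d)"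
    using ins_st[OF T] ins_yr[OF T] by simp
  have eq: "{(p, q). validR T p q \<and> improper (ins ?m T p q) = k \<and>
            young_root (ins ?m T p q) = a \<and> eld (ins ?m T p q) = d} =
     ((if cX then S1 else {}) \<union> (if cN then S2 else {})) \<union> ((if cY then S3 else {}) \<union> (if cT then S4 else {}))"
  proof (rule set_eqI)
    fix x :: "nat list \<times> lop"
    obtain p q where x: "x = (p, q)" by (cases x)
    show "x \<in> {(p, q). validR T p q \<and> improper (ins ?m T p q) = k \<and>
            young_root (ins ?m T p q) = a \<and> eld (ins ?m T p q) = d} \<longleftrightarrow>
      x \<in> ((if cX then S1 else {}) \<union> (if cN then S2 else {})) \<union> ((if cY then S3 else {}) \<union> (if cT then S4 else {}))"
    proof (cases "validR T p q")
      case False then show ?thesis unfolding x S1_def S2_def S3_def S4_def by auto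
    next
      case True
      note s = st[OF True]
      show ?thesis
      proof (cases "isX T p q")
        case True
        then have "tyN T p q = TN" by (rule isX_TN)
        then show ?thesis using s True \<open>validR T p q\<close> unfolding x S1_def S2_def S3_def S4_def cX_def cN_def cY_def cT_def
          by auto
      next
        case False
        then show ?thesis using s \<open>validR T p q\<close> unfolding x S1_def S2_def S3_def S4_def cX_def cN_def cY_def cT_def
          by (cases "tyN T p q") auto
      qed
    qed
  qed
  have fin: "\<And>P. finite {(p, q). validR T p q \<and> P p q}"
    using validN_fin unfolding validR_def by (simp add: conj_assoc)
  have f1: "finite (if cX then S1 else {})" "finite (if cN then S2 else {})"
    "finite (if cY then S3 else {})" "finite (if cT then S4 else {})"
    unfolding S1_def S2_def S3_def S4_def using fin by auto
  have d12: "(if cX then S1 else {}) \<inter> (if cN then S2 else {}) = {}" unfolding S1_def S2_def by auto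
  have d34: "(if cY then S3 else {}) \<inter> (if cT then S4 else {}) = {}" unfolding S3_def S4_def by auto
  have d: "((if cX then S1 else {}) \<union> (if cN then S2 else {})) \<inter> ((if cY then S3 else {}) \<union> (if cT then S4 else {})) = {}"
  proof -
    have "(S1 \<union> S2) \<inter> (S3 \<union> S4) = {}" unfolding S1_def S2_def S3_def S4_def by (auto dest: isX_TN)
    then show ?thesis by auto
  qed
  have "card (((if cX then S1 else {}) \<union> (if cN then S2 else {})) \<union> ((if cY then S3 else {}) \<union> (if cT then S4 else {}))) =
    card (if cX then S1 else {}) + card (if cN then S2 else {}) + (card (if cY then S3 else {}) + card (if cT then S4 else {}))"
    using f1 d12 d34 d by (simp add: card_Un_disjoint)
  also have "\<dots> = (if cX then 1 else 0) + (if cN then n else 0) + ((if cY then n + improper T else 0) + (if cT then n + improper T else 0))"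
    using rc unfolding S1_def S2_def S3_def S4_def by simp
  finally show ?thesis unfolding eq cX_def cN_def cY_def cT_def by simp
qed

lemma G_rec:
  "G (Suc n) k a d = (if 0 < a then G n k (a - 1) d else 0) + n * G n k a d
     + (if 0 < k then (n + k - 1) * G n (k - 1) a d else 0)
     + (if 0 < d then (n + k) * G n k a (d - 1) else 0)"
proof -
  let ?m = "Suc (Suc n)"
  let ?F = "\<lambda>(T, pk). ins ?m T (fst pk) (snd pk)"
  let ?B = "\<lambda>T. {(p, q). validR T p q \<and> improper (ins ?m T p q) = k \<and>
            young_root (ins ?m T p q) = a \<and> eld (ins ?m T p q) = d}"
  have seteq: "{Y \<in> OT (Suc (Suc n)). improper Y = k \<and> young_root Y = a \<and> eld Y = d} = ?F ` (SIGMA T:OT (Suc n). ?B T)"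
  proof
    show "{Y \<in> OT (Suc (Suc n)). improper Y = k \<and> young_root Y = a \<and> eld Y = d} \<subseteq> ?F ` (SIGMA T:OT (Suc n). ?B T)"
    proof
      fix Y assume Y: "Y \<in> {Y \<in> OT (Suc (Suc n)). improper Y = k \<and> young_root Y = a \<and> eld Y = d}"
      then obtain T p q where "T \<in> OT (Suc n)" "validR T p q" "ins ?m T p q = Y" using OT_surj by blast
      then show "Y \<in> ?F ` (SIGMA T:OT (Suc n). ?B T)" using Y
        by (intro image_eqI[of _ _ "(T, (p, q))"]) auto
    qed
    show "?F ` (SIGMA T:OT (Suc n). ?B T) \<subseteq> {Y \<in> OT (Suc (Suc n)). improper Y = k \<and> young_root Y = a \<and> eld Y = d}"
      using ins_OT by auto
  qed
  have inj: "inj_on ?F (SIGMA T:OT (Suc n). ?B T)"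
  proof (rule inj_onI)
    fix x y assume x: "x \<in> (SIGMA T:OT (Suc n). ?B T)" and y: "y \<in> (SIGMA T:OT (Suc n). ?B T)" and e: "?F x = ?F y"
    obtain T1 p1 q1 where x1: "x = (T1, (p1, q1))" by (metis prod.collapse)
    obtain T2 p2 q2 where y1: "y = (T2, (p2, q2))" by (metis prod.collapse)
    have "T1 \<in> OT (Suc n)" "validN T1 p1 q1" "T2 \<in> OT (Suc n)" "validN T2 p2 q2"
      using x y x1 y1 by (auto simp: validR_def)
    then show "x = y" using ins_inj[of T1 p1 q1 T2 p2 q2 ?m] OT_wfm e x1 y1 by auto
  qed
  have finB: "\<forall>T\<in>OT (Suc n). finite (?B T)"
    using validN_fin unfolding validR_def by (simp add: conj_assoc)
  have "G (Suc n) k a d = card (?F ` (SIGMA T:OT (Suc n). ?B T))"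
    unfolding G_def seteq ..
  also have "\<dots> = card (SIGMA T:OT (Suc n). ?B T)" using card_image[OF inj] .
  also have "\<dots> = (\<Sum>T\<in>OT (Suc n). card (?B T))" using OT_fin finB by simp
  also have "\<dots> = (\<Sum>T\<in>OT (Suc n).
     (if improper T = k \<and> Suc (young_root T) = a \<and> eld T = d then 1 else 0)
   + (if improper T = k \<and> young_root T = a \<and> eld T = d then n else 0)
   + (if Suc (improper T) = k \<and> young_root T = a \<and> eld T = d then n + improper T else 0)
   + (if improper T = k \<and> young_root T = a \<and> Suc (eld T) = d then n + improper T else 0))"
    by (rule sum.cong) (simp_all add: per_T)
  also have "\<dots> = (\<Sum>T\<in>OT (Suc n). (if improper T = k \<and> Suc (young_root T) = a \<and> eld T = d then 1 else 0))
   + (\<Sum>T\<in>OT (Suc n). (if improper T = k \<and> young_root T = a \<and> eld T = d then n else 0))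
   + (\<Sum>T\<in>OT (Suc n). (if Suc (improper T) = k \<and> young_root T = a \<and> eld T = d then n + (k - 1) else 0))
   + (\<Sum>T\<in>OT (Suc n). (if improper T = k \<and> young_root T = a \<and> Suc (eld T) = d then n + k else 0))"
  proof -
    have a: "(\<Sum>T\<in>OT (Suc n). (if Suc (improper T) = k \<and> young_root T = a \<and> eld T = d then n + improper T else 0))
      = (\<Sum>T\<in>OT (Suc n). (if Suc (improper T) = k \<and> young_root T = a \<and> eld T = d then n + (k - 1) else 0))"
      by (rule sum.cong) auto
    have b: "(\<Sum>T\<in>OT (Suc n). (if improper T = k \<and> young_root T = a \<and> Suc (eld T) = d then n + improper T else 0))
      = (\<Sum>T\<in>OT (Suc n). (if improper T = k \<and> young_root T = a \<and> Suc (eld T) = d then n + k else 0))"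
      by (rule sum.cong) auto
    show ?thesis by (simp only: sum.distrib a b)
  qed
  also have "\<dots> = (if 0 < a then G n k (a - 1) d else 0) + n * G n k a d
     + (if 0 < k then (n + k - 1) * G n (k - 1) a d else 0)
     + (if 0 < d then (n + k) * G n k a (d - 1) else 0)"
  proof -
    have f: "finite (OT (Suc n))" by (rule OT_fin)
    have c1: "{T \<in> OT (Suc n). improper T = k \<and> Suc (young_root T) = a \<and> eld T = d} =
       (if 0 < a then {T \<in> OT (Suc n). improper T = k \<and> young_root T = a - 1 \<and> eld T = d} else {})" by auto
    have c3: "{T \<in> OT (Suc n). Suc (improper T) = k \<and> young_root T = a \<and> eld T = d} =
       (if 0 < k then {T \<in> OT (Suc n). improper T = k - 1 \<and> young_root T = a \<and> eld T = d} else {})" by auto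
    have c4: "{T \<in> OT (Suc n). improper T = k \<and> young_root T = a \<and> Suc (eld T) = d} =
       (if 0 < d then {T \<in> OT (Suc n). improper T = k \<and> young_root T = a \<and> eld T = d - 1} else {})" by auto
    show ?thesis unfolding sum_if_const[OF f] c1 c3 c4 G_def
      by (simp add: mult.commute)
  qed
  finally show ?thesis .
qed

lemma G_g: "G n k a d = g n k a d"
proof (induction n arbitrary: k a d)
  case 0
  have "{T \<in> OT (Suc 0). improper T = k \<and> young_root T = a \<and> eld T = d} =
     (if k = 0 \<and> a = 0 \<and> d = 0 then {Node 1 []} else {})"
    unfolding OT_one by (auto simp: improper_Node eld_Node young_root_Node eld_children_def)
  then show ?case by (simp add: G_def)
next
  case (Suc n)
  show ?case unfolding G_rec by (simp add: Suc.IH)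
qed

theorem theorem2p1:
  fixes n k a d :: nat
  assumes "1 \<le> n" and "k \<le> n - 1"
  shows "Qnk n k a d = card {T \<in> Otrees (n + 1) k. young_root T - 1 = a \<and> eld T = d}"
proof -
  have z: "G n k 0 d = 0" using G_g g_a0[OF assms(1)] by simp
  have fin: "finite {T \<in> OT (Suc n). improper T = k \<and> young_root T = 0 \<and> eld T = d}"
    using OT_fin by simp
  have empty: "{T \<in> OT (Suc n). improper T = k \<and> young_root T = 0 \<and> eld T = d} = {}"
    using z fin unfolding G_def by simp
  have "{T \<in> Otrees (n + 1) k. young_root T - 1 = a \<and> eld T = d} =
        {T \<in> OT (Suc n). improper T = k \<and> young_root T = Suc a \<and> eld T = d}"
  proof (rule set_eqI)
    fix T
    show "T \<in> {T \<in> Otrees (n + 1) k. young_root T - 1 = a \<and> eld T = d} \<longleftrightarrow>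
          T \<in> {T \<in> OT (Suc n). improper T = k \<and> young_root T = Suc a \<and> eld T = d}"
    proof (cases "young_root T = 0")
      case True
      then have "T \<notin> {T \<in> OT (Suc n). improper T = k \<and> young_root T = 0 \<and> eld T = d}"
        using empty by blast
      then show ?thesis using True by (auto simp: Otrees_def OT_def)
    next
      case False
      then show ?thesis by (auto simp: Otrees_def OT_def)
    qed
  qed
  then have "card {T \<in> Otrees (n + 1) k. young_root T - 1 = a \<and> eld T = d} = G n k (Suc a) d"
    unfolding G_def by simp
  then show ?thesis using Qnk_g[OF assms(1)] G_g by simp
qed

end
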